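(* Let $L>0$ and let $f:\mathbb{R}\times\mathbb{R}\to\mathbb{R}$ be continuous, $L$-periodic in the first argument, and continuously differentiable in the second argument. Let $\alpha,\beta:[x_0,+\infty)\to\mathbb{R}$ be bounded twice differentiable functions such that (1) $\alpha(x)<\beta(x)$ for all $x>x_0$; (2) $\alpha_{xx}(x)>f(x,\alpha(x))$ and $\beta_{xx}(x)<f(x,\beta(x))$ for all $x>x_0$. Then there exists a solution $\phi$ of $\phi_{xx}=f(x,\phi)$ on $[x_0,+\infty)$ with $\alpha(x)<\phi(x)<\beta(x)$. If moreover (3) $\displaystyle\min_{x\in[0,L],\ y\in[\inf_{x\ge x_0}\alpha(x),\,\sup_{x\ge x_0}\beta(x)]}\frac{\partial f(x,y)}{\partial y}>0$, then there exists an $L$-periodic solution $\varphi$ of $\varphi_{xx}=f(x,\varphi)$ such that $$\lim_{x\to+\infty}\big(|\phi(x)-\varphi(x)|+|\phi_x(x)-\varphi_x(x)|\big)=0,$$ and $\varphi$ is the unique $L$-periodic solution of this equation with values in the interval $[\inf_{x\ge x_0}\alpha(x),\,\sup_{x\ge x_0}\beta(x)]$. *)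

theory Defs
  imports "HOL-Analysis.Analysis"
begin

definition solution_on_halfline ::
  "(real \<Rightarrow> real \<Rightarrow> real) \<Rightarrow> real \<Rightarrow> (real \<Rightarrow> real) \<Rightarrow> (real \<Rightarrow> real) \<Rightarrow> bool" where
  "solution_on_halfline f x0 psi psi' \<longleftrightarrow>
     (\<forall>x\<ge>x0. (psi has_real_derivative psi' x) (at x within {x0..}) \<and>
              (psi' has_real_derivative f x (psi x)) (at x within {x0..}))"

definition solution_on_real ::
  "(real \<Rightarrow> real \<Rightarrow> real) \<Rightarrow> (real \<Rightarrow> real) \<Rightarrow> bool" where
  "solution_on_real f psi \<longleftrightarrow>
     (\<forall>x. psi differentiable (at x) \<and>
          (deriv psi has_real_derivative f x (psi x)) (at x))"

definition L_periodic :: "real \<Rightarrow> (real \<Rightarrow> 'a) \<Rightarrow> bool" where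
  "L_periodic L g \<longleftrightarrow> (\<forall>x. g (x + L) = g x)"

end

theory Submission
  imports Defs "HOL-Analysis.Analysis"
begin

lemma no_max_pos2:
  fixes h h' :: "real \<Rightarrow> real"
  assumes d: "0 < \<delta>"
    and hd: "\<And>y. y \<in> ball x \<delta> \<Longrightarrow> (h has_real_derivative h' y) (at y)"
    and h2: "(h' has_real_derivative c) (at x)" and c: "c > 0"
    and mx: "\<And>y. y \<in> ball x \<delta> \<Longrightarrow> h y \<le> h x"
  shows False
proof -
  have "h' x = 0"
    by (rule DERIV_local_max[OF hd[of x] d]) (use d mx in \<open>auto simp: dist_real_def abs_minus_commute\<close>)
  obtain e where e: "e > 0" "\<And>t. t > 0 \<Longrightarrow> t < e \<Longrightarrow> h' x < h' (x + t)"
    using DERIV_pos_inc_right[OF h2 c] by blast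
  define t where "t = min e \<delta> / 2"
  have t: "t > 0" "t < e" "t < \<delta>" using e d by (auto simp: t_def)
  have "\<forall>z. x \<le> z \<and> z \<le> x + t \<longrightarrow> (h has_real_derivative h' z) (at z)"
    using t by (intro allI impI hd) (auto simp: dist_real_def)
  then obtain z where z: "x < z" "z < x + t" "h (x + t) - h x = (x + t - x) * h' z"
    using MVT2[of x "x + t" h h'] t by auto
  have "h' z > 0" using e(2)[of "z - x"] z t \<open>h' x = 0\<close> by auto
  then have "t * h' z > 0" using t(1) by (rule mult_pos_pos[rotated])
  then have "h (x + t) > h x" using z by simp
  moreover have "h (x + t) \<le> h x" using mx[of "x + t"] t by (auto simp: dist_real_def)
  ultimately show False by simp
qed

lemma periodic_nat:
  fixes g :: "real \<Rightarrow> 'a" and L x :: real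
  assumes "\<And>x. g (x + L) = g x"
  shows "g (x + real n * L) = g x"
proof (induction n)
  case (Suc n)
  have "g (x + real (Suc n) * L) = g ((x + real n * L) + L)" by (simp add: algebra_simps)
  also have "\<dots> = g x" using assms Suc by simp
  finally show ?case .
qed simp

lemma periodic_int:
  fixes g :: "real \<Rightarrow> 'a" and L x :: real
  assumes "\<And>x. g (x + L) = g x"
  shows "g (x + real_of_int k * L) = g x"
proof (cases "k \<ge> 0")
  case True
  then show ?thesis using periodic_nat[of g L x "nat k"] assms by simp
next
  case False
  have "g (x + real_of_int k * L) = g ((x + real_of_int k * L) + real (nat (-k)) * L)"
    using periodic_nat[of g L "x + real_of_int k * L" "nat (-k)"] assms by simp
  also have "\<dots> = g x" using False by (simp add: algebra_simps)
  finally show ?thesis .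
qed

lemma periodic_reduce:
  fixes g :: "real \<Rightarrow> 'a" and L x :: real
  assumes "\<And>x. g (x + L) = g x" "L > 0"
  shows "\<exists>x'\<in>{0..L}. g x = g x'"
proof -
  define k where "k = \<lfloor>x / L\<rfloor>"
  define x' where "x' = x - real_of_int k * L"
  have "real_of_int k \<le> x / L" "x / L < real_of_int k + 1" unfolding k_def by linarith+
  then have "real_of_int k * L \<le> x" "x < (real_of_int k + 1) * L" using assms(2)
    by (auto simp: field_simps)
  then have "x' \<in> {0..L}" unfolding x'_def by (auto simp: algebra_simps)
  moreover have "g x' = g x" using periodic_int[of g L x' "k"] assms(1) by (simp add: x'_def)
  ultimately show ?thesis by metis
qed

locale setting =
  fixes L x0 :: real
    and f :: "real \<Rightarrow> real \<Rightarrow> real"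
    and \<alpha> \<alpha>' \<alpha>'' \<beta> \<beta>' \<beta>'' :: "real \<Rightarrow> real"
  assumes L_pos: "L > 0"
    and f_cont: "continuous_on UNIV (\<lambda>(x, y). f x y)"
    and f_per: "\<forall>x y. f (x + L) y = f x y"
    and f_diff: "\<forall>x y. (\<lambda>y. f x y) differentiable (at y)"
    and fy_cont: "continuous_on UNIV (\<lambda>(x, y). deriv (\<lambda>y. f x y) y)"
    and \<alpha>_bdd: "bounded (\<alpha> ` {x0..})"
    and \<beta>_bdd: "bounded (\<beta> ` {x0..})"
    and \<alpha>_d1: "\<forall>x\<ge>x0. (\<alpha> has_real_derivative \<alpha>' x) (at x within {x0..})"
    and \<alpha>_d2: "\<forall>x\<ge>x0. (\<alpha>' has_real_derivative \<alpha>'' x) (at x within {x0..})"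
    and \<beta>_d1: "\<forall>x\<ge>x0. (\<beta> has_real_derivative \<beta>' x) (at x within {x0..})"
    and \<beta>_d2: "\<forall>x\<ge>x0. (\<beta>' has_real_derivative \<beta>'' x) (at x within {x0..})"
    and ord: "\<forall>x>x0. \<alpha> x < \<beta> x"
    and lower: "\<forall>x>x0. \<alpha>'' x > f x (\<alpha> x)"
    and upper: "\<forall>x>x0. \<beta>'' x < f x (\<beta> x)"
begin

definition "a = Inf (\<alpha> ` {x0..})"
definition "b = Sup (\<beta> ` {x0..})"

lemma a_le: "x \<ge> x0 \<Longrightarrow> a \<le> \<alpha> x"
  unfolding a_def using \<alpha>_bdd by (intro cInf_lower) (auto intro: bounded_imp_bdd_below)

lemma b_ge: "x \<ge> x0 \<Longrightarrow> \<beta> x \<le> b"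
  unfolding b_def using \<beta>_bdd by (intro cSup_upper) (auto intro: bounded_imp_bdd_above)

lemma \<alpha>_cont: "continuous_on {x0..} \<alpha>"
  using \<alpha>_d1 by (auto simp: continuous_on_eq_continuous_within intro: DERIV_continuous)

lemma \<beta>_cont: "continuous_on {x0..} \<beta>"
  using \<beta>_d1 by (auto simp: continuous_on_eq_continuous_within intro: DERIV_continuous)

lemma ord0: "\<alpha> x0 \<le> \<beta> x0"
proof -
  have "continuous (at x0 within {x0..}) (\<lambda>x. \<beta> x - \<alpha> x)"
    using \<alpha>_cont \<beta>_cont by (auto simp: continuous_on_eq_continuous_within intro!: continuous_intros)
  then have "((\<lambda>x. \<beta> x - \<alpha> x) \<longlongrightarrow> \<beta> x0 - \<alpha> x0) (at x0 within {x0..})"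
    by (simp add: continuous_within)
  then have "((\<lambda>x. \<beta> x - \<alpha> x) \<longlongrightarrow> \<beta> x0 - \<alpha> x0) (at_right x0)"
    by (rule tendsto_within_subset) auto
  moreover have "eventually (\<lambda>x. 0 \<le> \<beta> x - \<alpha> x) (at_right x0)"
    by (rule eventually_at_rightI[of x0 "x0+1"]) (use ord in \<open>auto intro: less_imp_le\<close>)
  ultimately have "0 \<le> \<beta> x0 - \<alpha> x0"
    by (rule tendsto_lowerbound) simp
  then show ?thesis by simp
qed

lemma ordle: "x \<ge> x0 \<Longrightarrow> \<alpha> x \<le> \<beta> x"
  using ord ord0 by (metis less_eq_real_def order_less_imp_le)

lemma ab: "a \<le> b" using a_le[of x0] b_ge[of x0] ordle[of x0] by simp

lemma f_shift: "f (x + L) = f x" using f_per by auto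

lemma f_red: "\<exists>x'\<in>{0..L}. f x = f x'"
  using periodic_reduce[of f L x] f_shift L_pos by blast

definition "fy x y = deriv (\<lambda>y. f x y) y"

lemma fy_deriv: "((\<lambda>y. f x y) has_real_derivative fy x y) (at y)"
  unfolding fy_def using f_diff by (simp add: DERIV_deriv_iff_real_differentiable)

lemma compact_strip: "compact ({0..L} \<times> {a..b})"
  by (intro compact_Times compact_Icc)

lemma exB: "\<exists>B. \<forall>x y. y \<in> {a..b} \<longrightarrow> \<bar>f x y\<bar> \<le> B"
proof -
  have "compact ((\<lambda>(x, y). f x y) ` ({0..L} \<times> {a..b}))"
    by (intro compact_continuous_image continuous_on_subset[OF f_cont] compact_strip) auto
  then obtain B where B: "\<And>z. z \<in> (\<lambda>(x, y). f x y) ` ({0..L} \<times> {a..b}) \<Longrightarrow> \<bar>z\<bar> \<le> B"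
    using compact_imp_bounded bounded_real by metis
  show ?thesis
  proof (intro exI allI impI)
    fix x y assume y: "y \<in> {a..b}"
    obtain x' where x': "x' \<in> {0..L}" "f x = f x'" using f_red by blast
    have "f x' y \<in> (\<lambda>(x, y). f x y) ` ({0..L} \<times> {a..b})"
      using x' y by (intro rev_image_eqI[of "(x', y)"]) auto
    then show "\<bar>f x y\<bar> \<le> B" using B x' by auto
  qed
qed

lemma exK: "\<exists>K. \<forall>x y. y \<in> {a..b} \<longrightarrow> \<bar>fy x y\<bar> \<le> K"
proof -
  have "compact ((\<lambda>(x, y). deriv (\<lambda>y. f x y) y) ` ({0..L} \<times> {a..b}))"
    by (intro compact_continuous_image continuous_on_subset[OF fy_cont] compact_strip) auto
  then obtain B where B: "\<And>z. z \<in> (\<lambda>(x, y). deriv (\<lambda>y. f x y) y) ` ({0..L} \<times> {a..b}) \<Longrightarrow> \<bar>z\<bar> \<le> B"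
    using compact_imp_bounded bounded_real by metis
  show ?thesis
  proof (intro exI allI impI)
    fix x y assume y: "y \<in> {a..b}"
    obtain x' where x': "x' \<in> {0..L}" "f x = f x'" using f_red by blast
    have "deriv (\<lambda>y. f x' y) y \<in> (\<lambda>(x, y). deriv (\<lambda>y. f x y) y) ` ({0..L} \<times> {a..b})"
      using x' y by (intro rev_image_eqI[of "(x', y)"]) auto
    then show "\<bar>fy x y\<bar> \<le> B" using B x' by (auto simp: fy_def)
  qed
qed

definition "B = (SOME B. \<forall>x y. y \<in> {a..b} \<longrightarrow> \<bar>f x y\<bar> \<le> B)"
definition "K = (SOME K. \<forall>x y. y \<in> {a..b} \<longrightarrow> \<bar>fy x y\<bar> \<le> K)"

lemma B: "y \<in> {a..b} \<Longrightarrow> \<bar>f x y\<bar> \<le> B"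
  using someI_ex[OF exB] unfolding B_def by blast

lemma K: "y \<in> {a..b} \<Longrightarrow> \<bar>fy x y\<bar> \<le> K"
  using someI_ex[OF exK] unfolding K_def by blast

lemma B_nn: "B \<ge> 0" using B[of a 0] ab by auto
lemma K_nn: "K \<ge> 0" using K[of a 0] ab by auto

lemma f_mvt:
  assumes "u \<in> {a..b}" "v \<in> {a..b}"
  shows "\<exists>z\<in>{a..b}. f x u - f x v = (u - v) * fy x z"
proof (cases "u = v")
  case True then show ?thesis using assms by auto
next
  case False
  have der: "\<forall>z. (\<lambda>y. f x y) differentiable (at z)" using f_diff by auto
  show ?thesis
  proof (cases "v < u")
    case True
    obtain z where "v < z" "z < u" "f x u - f x v = (u - v) * fy x z"
      using MVT2[of v u "\<lambda>y. f x y" "fy x"] True fy_deriv by blast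
    then show ?thesis using assms by (intro bexI[of _ z]) auto
  next
    case F: False
    then have "u < v" using False by simp
    obtain z where "u < z" "z < v" "f x v - f x u = (v - u) * fy x z"
      using MVT2[of u v "\<lambda>y. f x y" "fy x"] \<open>u < v\<close> fy_deriv by blast
    then show ?thesis using assms by (intro bexI[of _ z]) (auto simp: algebra_simps)
  qed
qed

lemma f_lip:
  assumes "u \<in> {a..b}" "v \<in> {a..b}"
  shows "\<bar>f x u - f x v\<bar> \<le> K * \<bar>u - v\<bar>"
proof -
  obtain z where z: "z \<in> {a..b}" "f x u - f x v = (u - v) * fy x z" using f_mvt[OF assms] by blast
  have "\<bar>f x u - f x v\<bar> = \<bar>u - v\<bar> * \<bar>fy x z\<bar>" using z by (simp add: abs_mult)
  also have "\<dots> \<le> \<bar>u - v\<bar> * K" using K[OF z(1)] by (intro mult_left_mono) auto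
  finally show ?thesis by (simp add: mult.commute)
qed

end

context setting begin

definition "cl x y = max (\<alpha> (max x x0)) (min (\<beta> (max x x0)) y)"
definition "F x y = f x (cl x y)"

lemma cl_ab: "cl x y \<in> {a..b}"
  using a_le[of "max x x0"] b_ge[of "max x x0"] ordle[of "max x x0"] unfolding cl_def by auto

lemma cl_lip: "\<bar>cl x y - cl x z\<bar> \<le> \<bar>y - z\<bar>"
  unfolding cl_def by (auto simp: max_def min_def)

lemma F_bound: "\<bar>F x y\<bar> \<le> B"
  unfolding F_def using B cl_ab by blast

lemma F_lip: "\<bar>F x y - F x z\<bar> \<le> K * \<bar>y - z\<bar>"
proof -
  have "\<bar>F x y - F x z\<bar> \<le> K * \<bar>cl x y - cl x z\<bar>"
    unfolding F_def using f_lip cl_ab by blast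
  also have "\<dots> \<le> K * \<bar>y - z\<bar>" using cl_lip K_nn by (intro mult_left_mono) auto
  finally show ?thesis .
qed

lemma F_in: "x \<ge> x0 \<Longrightarrow> \<alpha> x \<le> y \<Longrightarrow> y \<le> \<beta> x \<Longrightarrow> F x y = f x y"
  unfolding F_def cl_def by (auto simp: max_def min_def)

lemma F_above: "x > x0 \<Longrightarrow> y \<ge> \<beta> x \<Longrightarrow> F x y = f x (\<beta> x)"
  unfolding F_def cl_def using ord by (auto simp: max_def min_def)

lemma F_below: "x > x0 \<Longrightarrow> y \<le> \<alpha> x \<Longrightarrow> F x y = f x (\<alpha> x)"
  unfolding F_def cl_def using ord by (auto simp: max_def min_def)

lemma F_cont:
  assumes "continuous_on S u"
  shows "continuous_on S (\<lambda>t. F t (u t))"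
proof -
  have ca: "continuous_on UNIV (\<lambda>t. \<alpha> (max t x0))"
    by (rule continuous_on_compose2[OF \<alpha>_cont]) (auto intro!: continuous_intros)
  have cb: "continuous_on UNIV (\<lambda>t. \<beta> (max t x0))"
    by (rule continuous_on_compose2[OF \<beta>_cont]) (auto intro!: continuous_intros)
  have "continuous_on S (\<lambda>t. cl t (u t))"
    unfolding cl_def
    by (intro continuous_intros continuous_on_subset[OF ca] continuous_on_subset[OF cb] assms) auto
  then have "continuous_on S (\<lambda>t. (t, cl t (u t)))" by (intro continuous_intros)
  from continuous_on_compose2[OF f_cont this] show ?thesis by (simp add: F_def)
qed

definition "prim h y = integral {x0..y} h"

lemma prim_deriv:
  assumes h: "continuous_on {x0..} h" and y: "y \<ge> x0"
  shows "(prim h has_real_derivative h y) (at y within {x0..})"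
proof -
  have "((\<lambda>x. integral {x0..x} h) has_real_derivative h y) (at y within {x0..y+1})"
    by (rule integral_has_real_derivative) (use y in \<open>auto intro: continuous_on_subset[OF h]\<close>)
  moreover have "at y within {x0..y+1} = at y within {x0..}"
    by (rule at_within_nhd[of _ "{..<y+1}"]) (use y in auto)
  ultimately show ?thesis unfolding prim_def[abs_def] by simp
qed

lemma prim_cont:
  fixes h :: "real \<Rightarrow> real"
  assumes h: "continuous_on {x0..} h"
  shows "continuous_on {x0..} (prim h)"
  using prim_deriv[OF h] by (auto simp: continuous_on_eq_continuous_within intro: DERIV_continuous)

lemma exp_int:
  assumes l: "l > 0" and y: "y \<ge> x0"
  shows "((\<lambda>t. exp (l * (t - x0))) has_integral (exp (l * (y - x0)) - 1) / l) {x0..y}"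
proof -
  have "((\<lambda>t. exp (l * (t - x0))) has_integral (exp (l * (y - x0)) / l - exp (l * (x0 - x0)) / l)) {x0..y}"
  proof (rule fundamental_theorem_of_calculus[OF y])
    fix t assume "t \<in> {x0..y}"
    have "((\<lambda>t. exp (l * (t - x0)) / l) has_real_derivative exp (l * (t - x0)) * (l * 1) / l) (at t)"
      by (auto intro!: derivative_eq_intros)
    then show "((\<lambda>t. exp (l * (t - x0)) / l) has_vector_derivative exp (l * (t - x0))) (at t within {x0..y})"
      using l by (auto simp: has_real_derivative_iff_has_vector_derivative[symmetric] intro: has_field_derivative_at_within)
  qed
  then show ?thesis by (simp add: diff_divide_distrib)
qed

lemma prim_diff_bound:
  assumes h1: "continuous_on {x0..} h1" and h2: "continuous_on {x0..} h2"
    and l: "l > 0" and c: "c \<ge> 0" and y: "y \<ge> x0"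
    and bd: "\<And>t. t \<in> {x0..y} \<Longrightarrow> \<bar>h1 t - h2 t\<bar> \<le> c * exp (l * (t - x0))"
  shows "\<bar>prim h1 y - prim h2 y\<bar> \<le> c * exp (l * (y - x0)) / l"
proof -
  have i1: "h1 integrable_on {x0..y}" by (rule integrable_continuous_interval) (rule continuous_on_subset[OF h1], auto)
  have i2: "h2 integrable_on {x0..y}" by (rule integrable_continuous_interval) (rule continuous_on_subset[OF h2], auto)
  have "prim h1 y - prim h2 y = integral {x0..y} (\<lambda>t. h1 t - h2 t)"
    unfolding prim_def using integral_diff[OF i1 i2] by simp
  also have "\<bar>\<dots>\<bar> \<le> integral {x0..y} (\<lambda>t. c * exp (l * (t - x0)))"
  proof -
    have i3: "(\<lambda>t. h1 t - h2 t) integrable_on {x0..y}" by (rule integrable_diff[OF i1 i2])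
    have i4: "(\<lambda>t. c * exp (l * (t - x0))) integrable_on {x0..y}"
      using has_integral_mult_right[OF exp_int[OF l y], of c] by (rule has_integral_integrable)
    show ?thesis
      using integral_norm_bound_integral[OF i3 i4] bd by simp
  qed
  also have "\<dots> = c * ((exp (l * (y - x0)) - 1) / l)"
    using integral_unique[OF has_integral_mult_right[OF exp_int[OF l y], of c]] by simp
  also have "\<dots> \<le> c * exp (l * (y - x0)) / l"
    using c l by (auto simp: field_simps intro!: mult_left_mono)
  finally show ?thesis .
qed

end

context setting begin

definition "l = K + 2"
lemma l_pos: "l > 0" using K_nn by (simp add: l_def)
lemma l_contr: "K / l\<^sup>2 \<le> 1/2"
proof -
  have "2 * K \<le> l\<^sup>2" using K_nn by (simp add: l_def power2_eq_square algebra_simps)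
  then show ?thesis using l_pos by (simp add: field_simps)
qed

definition "Wt g t = exp (l * (t - x0)) * g t"
definition "Inner g = (\<lambda>t. F t (Wt g t))"
definition "PP g y = prim (prim (Inner g)) y"
definition "op p s g x = exp (-(l * (max x x0 - x0))) * (p + s * (max x x0 - x0) + PP g (max x x0))"

lemma Inner_cont: "continuous_on UNIV g \<Longrightarrow> continuous_on UNIV (Inner g)"
  unfolding Inner_def Wt_def by (intro F_cont continuous_intros) auto

lemma Inner_cont': "continuous_on UNIV g \<Longrightarrow> continuous_on {x0..} (Inner g)"
  using Inner_cont continuous_on_subset by blast

lemma exp_ge1: "t \<ge> x0 \<Longrightarrow> 1 \<le> exp (l * (t - x0))"
  using l_pos by simp

lemma prim_Inner_bound:
  assumes "continuous_on UNIV g" "r \<ge> x0"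
  shows "\<bar>prim (Inner g) r\<bar> \<le> B * exp (l * (r - x0)) / l"
proof -
  have "\<bar>prim (Inner g) r - prim (\<lambda>_. 0) r\<bar> \<le> B * exp (l * (r - x0)) / l"
  proof (rule prim_diff_bound[OF Inner_cont'[OF assms(1)] _ l_pos B_nn assms(2)])
    fix t assume t: "t \<in> {x0..r}"
    have "\<bar>Inner g t\<bar> \<le> B" unfolding Inner_def by (rule F_bound)
    also have "\<dots> \<le> B * exp (l * (t - x0))" using exp_ge1[of t] t B_nn
      by (metis atLeastAtMost_iff mult.right_neutral mult_left_mono)
    finally show "\<bar>Inner g t - 0\<bar> \<le> B * exp (l * (t - x0))" by simp
  qed auto
  moreover have "prim (\<lambda>_. 0::real) r = 0" by (simp add: prim_def)
  ultimately show ?thesis by simp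
qed

lemma PP_bound:
  assumes "continuous_on UNIV g" "y \<ge> x0"
  shows "\<bar>PP g y\<bar> \<le> B * exp (l * (y - x0)) / l\<^sup>2"
proof -
  have "\<bar>prim (prim (Inner g)) y - prim (\<lambda>_. 0) y\<bar> \<le> (B / l) * exp (l * (y - x0)) / l"
  proof (rule prim_diff_bound[OF prim_cont[OF Inner_cont'[OF assms(1)]] _ l_pos _ assms(2)])
    fix t assume t: "t \<in> {x0..y}"
    show "\<bar>prim (Inner g) t - 0\<bar> \<le> B / l * exp (l * (t - x0))"
      using prim_Inner_bound[OF assms(1), of t] t by simp
  qed (use B_nn l_pos in auto)
  moreover have "prim (\<lambda>_. 0::real) y = 0" by (simp add: prim_def)
  ultimately show ?thesis by (simp add: PP_def power2_eq_square)
qed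

lemma Inner_diff:
  assumes "\<And>t. \<bar>g t - h t\<bar> \<le> d"
  shows "\<bar>Inner g t - Inner h t\<bar> \<le> K * d * exp (l * (t - x0))"
proof -
  have "\<bar>Inner g t - Inner h t\<bar> \<le> K * \<bar>Wt g t - Wt h t\<bar>" unfolding Inner_def by (rule F_lip)
  also have "\<bar>Wt g t - Wt h t\<bar> = exp (l * (t - x0)) * \<bar>g t - h t\<bar>"
    unfolding Wt_def by (simp add: abs_mult right_diff_distrib[symmetric])
  also have "K * \<dots> \<le> K * (exp (l * (t - x0)) * d)"
    using assms[of t] K_nn by (intro mult_left_mono) auto
  finally show ?thesis by (simp add: algebra_simps)
qed

lemma PP_diff:
  assumes g: "continuous_on UNIV g" and h: "continuous_on UNIV h" and y: "y \<ge> x0"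
    and d: "\<And>t. \<bar>g t - h t\<bar> \<le> d" "d \<ge> 0"
  shows "\<bar>PP g y - PP h y\<bar> \<le> K * d * exp (l * (y - x0)) / l\<^sup>2"
proof -
  have "\<bar>prim (prim (Inner g)) y - prim (prim (Inner h)) y\<bar> \<le> (K * d / l) * exp (l * (y - x0)) / l"
  proof (rule prim_diff_bound[OF prim_cont[OF Inner_cont'[OF g]] prim_cont[OF Inner_cont'[OF h]] l_pos _ y])
    fix t assume t: "t \<in> {x0..y}"
    show "\<bar>prim (Inner g) t - prim (Inner h) t\<bar> \<le> K * d / l * exp (l * (t - x0))"
      using prim_diff_bound[OF Inner_cont'[OF g] Inner_cont'[OF h] l_pos _ _ Inner_diff[OF d(1)], of t] t
        K_nn d(2) by auto
  qed (use K_nn d l_pos in auto)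
  then show ?thesis by (simp add: PP_def power2_eq_square)
qed

lemma op_cont:
  assumes "continuous_on UNIV g"
  shows "continuous_on UNIV (op p s g)"
proof -
  have c1: "continuous_on {x0..} (PP g)" unfolding PP_def
    by (intro prim_cont Inner_cont' assms)
  have "continuous_on UNIV (\<lambda>x. PP g (max x x0))"
    by (rule continuous_on_compose2[OF c1]) (auto intro!: continuous_intros)
  then show ?thesis unfolding op_def by (intro continuous_intros)
qed

lemma exp_lin: "\<tau> \<ge> 0 \<Longrightarrow> exp (-(l * \<tau>)) * \<tau> \<le> 1 / l"
proof -
  assume t: "\<tau> \<ge> 0"
  have "l * \<tau> \<le> exp (l * \<tau>)" using exp_ge_add_one_self[of "l * \<tau>"] by linarith
  then have "\<tau> \<le> exp (l * \<tau>) / l" using l_pos by (simp add: field_simps)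
  then have "exp (-(l * \<tau>)) * \<tau> \<le> exp (-(l * \<tau>)) * (exp (l * \<tau>) / l)" by (intro mult_left_mono) auto
  also have "\<dots> = 1 / l" by (simp add: exp_minus field_simps)
  finally show ?thesis .
qed

lemma op_bound:
  assumes "continuous_on UNIV g"
  shows "\<bar>op p s g x\<bar> \<le> \<bar>p\<bar> + \<bar>s\<bar> / l + B / l\<^sup>2"
proof -
  define \<tau> where "\<tau> = max x x0 - x0"
  have t: "\<tau> \<ge> 0" by (simp add: \<tau>_def)
  have e: "exp (-(l * \<tau>)) \<le> 1" "exp (-(l * \<tau>)) > 0" using t l_pos by auto
  have "\<bar>op p s g x\<bar> \<le> exp (-(l * \<tau>)) * (\<bar>p\<bar> + \<bar>s\<bar> * \<tau> + \<bar>PP g (max x x0)\<bar>)"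
    unfolding op_def \<tau>_def[symmetric] using e t
    by (auto simp: abs_mult intro!: mult_left_mono abs_triangle_ineq[THEN order_trans] order_trans[OF abs_triangle_ineq add_mono])
  also have "\<dots> \<le> exp (-(l * \<tau>)) * (\<bar>p\<bar> + \<bar>s\<bar> * \<tau> + B * exp (l * \<tau>) / l\<^sup>2)"
    using PP_bound[OF assms, of "max x x0"] e by (intro mult_left_mono) (auto simp: \<tau>_def)
  also have "\<dots> = exp (-(l * \<tau>)) * \<bar>p\<bar> + \<bar>s\<bar> * (exp (-(l * \<tau>)) * \<tau>) + B / l\<^sup>2"
    by (simp add: algebra_simps exp_minus field_simps)
  also have "\<dots> \<le> \<bar>p\<bar> + \<bar>s\<bar> * (1 / l) + B / l\<^sup>2"
    using e exp_lin[OF t] by (intro add_mono mult_left_mono) (auto intro: mult_left_le_one_le)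
  finally show ?thesis by simp
qed

lemma op_bcont: "op p s (apply_bcontfun g) \<in> bcontfun"
  by (rule bcontfun_normI[OF op_cont]) (auto intro: op_bound)

end

context setting begin

definition "T p s g = Bcontfun (op p s (apply_bcontfun g))"

lemma T_apply: "apply_bcontfun (T p s g) = op p s (apply_bcontfun g)"
  by (simp add: T_def Bcontfun_inverse op_bcont)

lemma op_contr:
  fixes g h :: "real \<Rightarrow>\<^sub>C real"
  shows "\<bar>op p s g x - op p s h x\<bar> \<le> 1/2 * dist g h"
proof -
  define \<tau> where "\<tau> = max x x0 - x0"
  have d: "\<bar>apply_bcontfun g t - apply_bcontfun h t\<bar> \<le> dist g h" for t
  proof -
    have "dist (apply_bcontfun g t) (apply_bcontfun h t) \<le> dist g h" by (rule dist_bounded)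
    then show ?thesis by (simp only: dist_real_def)
  qed
  have eq: "op p s g x - op p s h x = exp (-(l * \<tau>)) * (PP g (max x x0) - PP h (max x x0))"
    unfolding op_def \<tau>_def by (simp add: algebra_simps)
  have "\<bar>op p s g x - op p s h x\<bar> = exp (-(l * \<tau>)) * \<bar>PP g (max x x0) - PP h (max x x0)\<bar>"
    unfolding eq by (simp add: abs_mult)
  also have "\<dots> \<le> exp (-(l * \<tau>)) * (K * dist g h * exp (l * \<tau>) / l\<^sup>2)"
  proof (rule mult_left_mono)
    show "\<bar>PP g (max x x0) - PP h (max x x0)\<bar> \<le> K * dist g h * exp (l * \<tau>) / l\<^sup>2"
      unfolding \<tau>_def by (rule PP_diff[OF continuous_on_apply_bcontfun continuous_on_apply_bcontfun _ d zero_le_dist]) simp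
  qed simp
  also have "\<dots> = K / l\<^sup>2 * dist g h" by (simp add: exp_minus divide_simps)
  also have "\<dots> \<le> 1/2 * dist g h" using l_contr by (intro mult_right_mono) auto
  finally show ?thesis .
qed

lemma T_contr: "dist (T p s g) (T p s h) \<le> 1/2 * dist g h"
proof (rule dist_bound)
  fix x
  show "dist (apply_bcontfun (T p s g) x) (apply_bcontfun (T p s h) x) \<le> 1/2 * dist g h"
    unfolding T_apply dist_real_def by (rule op_contr)
qed

lemma op_s: "\<bar>op p s g x - op p s' g x\<bar> \<le> \<bar>s - s'\<bar> / l"
proof -
  define \<tau> where "\<tau> = max x x0 - x0"
  have t: "\<tau> \<ge> 0" by (simp add: \<tau>_def)
  have eq: "op p s g x - op p s' g x = (s - s') * (exp (-(l * \<tau>)) * \<tau>)"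
    unfolding op_def \<tau>_def by (simp add: algebra_simps)
  have "\<bar>op p s g x - op p s' g x\<bar> = \<bar>s - s'\<bar> * (exp (-(l * \<tau>)) * \<tau>)" unfolding eq using t by (simp add: abs_mult)
  also have "\<dots> \<le> \<bar>s - s'\<bar> * (1 / l)" using exp_lin[OF t] by (intro mult_left_mono) auto
  finally show ?thesis by simp
qed

lemma T_s: "dist (T p s g) (T p s' g) \<le> \<bar>s - s'\<bar> / l"
proof (rule dist_bound)
  fix x
  show "dist (apply_bcontfun (T p s g) x) (apply_bcontfun (T p s' g) x) \<le> \<bar>s - s'\<bar> / l"
    unfolding T_apply dist_real_def by (rule op_s)
qed

lemma fp_ex: "\<exists>!g. T p s g = g"
proof -
  have "\<forall>g h. dist (T p s g) (T p s h) \<le> 1/2 * dist g h" using T_contr by blast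
  from banach_fix_type[OF _ _ this] show ?thesis by simp
qed

definition "fp p s = (THE g. T p s g = g)"

lemma fp_eq: "T p s (fp p s) = fp p s"
  unfolding fp_def by (rule theI'[OF fp_ex])

lemma fp_lip: "dist (fp p s) (fp p s') \<le> 2 * \<bar>s - s'\<bar> / l"
proof -
  have "dist (fp p s) (fp p s') = dist (T p s (fp p s)) (T p s' (fp p s'))" by (simp add: fp_eq)
  also have "\<dots> \<le> dist (T p s (fp p s)) (T p s (fp p s')) + dist (T p s (fp p s')) (T p s' (fp p s'))"
    by (rule dist_triangle)
  also have "\<dots> \<le> 1/2 * dist (fp p s) (fp p s') + \<bar>s - s'\<bar> / l"
    by (intro add_mono T_contr T_s)
  finally show ?thesis by simp
qed

definition "u p s = Wt (apply_bcontfun (fp p s))"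
definition "u' p s y = s + prim (\<lambda>t. F t (u p s t)) y"

lemma Inner_u: "Inner (apply_bcontfun (fp p s)) = (\<lambda>t. F t (u p s t))"
  by (simp add: Inner_def u_def)

lemma u_cont: "continuous_on UNIV (u p s)"
  unfolding u_def Wt_def[abs_def] by (intro continuous_intros) auto

lemma Fu_cont: "continuous_on {x0..} (\<lambda>t. F t (u p s t))"
  using F_cont[OF u_cont] continuous_on_subset by blast

lemma u_eq:
  assumes y: "y \<ge> x0"
  shows "u p s y = p + s * (y - x0) + prim (prim (\<lambda>t. F t (u p s t))) y"
proof -
  have "apply_bcontfun (fp p s) y = op p s (fp p s) y"
    by (metis T_apply fp_eq)
  moreover have "max y x0 = y" using y by simp
  ultimately have "apply_bcontfun (fp p s) y = exp (-(l * (y - x0))) * (p + s * (y - x0) + prim (prim (\<lambda>t. F t (u p s t))) y)"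
    unfolding op_def PP_def Inner_u by simp
  then have "exp (l * (y - x0)) * apply_bcontfun (fp p s) y = (exp (l * (y - x0)) * exp (-(l * (y - x0)))) * (p + s * (y - x0) + prim (prim (\<lambda>t. F t (u p s t))) y)"
    by simp
  also have "exp (l * (y - x0)) * exp (-(l * (y - x0))) = 1" by (simp add: exp_minus)
  finally show ?thesis unfolding u_def Wt_def by simp
qed

lemma u_d1:
  assumes y: "y \<ge> x0"
  shows "(u p s has_real_derivative u' p s y) (at y within {x0..})"
proof -
  have d1: "((\<lambda>y. s * (y - x0)) has_real_derivative s) (at y within {x0..})"
    by (auto intro!: derivative_eq_intros)
  have d2: "(prim (prim (\<lambda>t. F t (u p s t))) has_real_derivative prim (\<lambda>t. F t (u p s t)) y) (at y within {x0..})"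
    by (intro prim_deriv prim_cont Fu_cont y)
  have "((\<lambda>y. p + s * (y - x0) + prim (prim (\<lambda>t. F t (u p s t))) y) has_real_derivative
      0 + s + prim (\<lambda>t. F t (u p s t)) y) (at y within {x0..})"
    by (intro DERIV_add[OF DERIV_add[OF DERIV_const d1] d2])
  then have "((\<lambda>y. p + s * (y - x0) + prim (prim (\<lambda>t. F t (u p s t))) y) has_real_derivative
      u' p s y) (at y within {x0..})" by (simp add: u'_def)
  then show ?thesis
    by (rule has_field_derivative_transform_within[of _ _ _ _ 1]) (use y in \<open>auto intro!: u_eq[symmetric]\<close>)
qed

lemma u_d2:
  assumes y: "y \<ge> x0"
  shows "(u' p s has_real_derivative F y (u p s y)) (at y within {x0..})"
proof -
  have "((\<lambda>y. s + prim (\<lambda>t. F t (u p s t)) y) has_real_derivative 0 + F y (u p s y)) (at y within {x0..})"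
    using prim_deriv[OF Fu_cont y] by (intro derivative_intros) auto
  then show ?thesis by (simp add: u'_def[abs_def])
qed

lemma u_lip:
  assumes y: "y \<ge> x0"
  shows "\<bar>u p s y - u p s' y\<bar> \<le> exp (l * (y - x0)) * (2 * \<bar>s - s'\<bar> / l)"
proof -
  have "\<bar>apply_bcontfun (fp p s) y - apply_bcontfun (fp p s') y\<bar> \<le> 2 * \<bar>s - s'\<bar> / l"
    using dist_bounded[of "fp p s" y "fp p s'"] fp_lip[of p s s'] by (simp add: dist_real_def)
  then have "exp (l * (y - x0)) * \<bar>apply_bcontfun (fp p s) y - apply_bcontfun (fp p s') y\<bar> \<le> exp (l * (y - x0)) * (2 * \<bar>s - s'\<bar> / l)"
    by (rule mult_left_mono) auto
  then show ?thesis unfolding u_def Wt_def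
    by (simp add: abs_mult right_diff_distrib[symmetric])
qed

lemma u_bnd:
  assumes y: "y \<ge> x0"
  shows "\<bar>u p s y - (p + s * (y - x0))\<bar> \<le> B * exp (l * (y - x0)) / l\<^sup>2"
proof -
  have "\<bar>prim (prim (\<lambda>t. F t (u p s t))) y\<bar> \<le> B * exp (l * (y - x0)) / l\<^sup>2"
    using PP_bound[of "apply_bcontfun (fp p s)" y] y unfolding PP_def Inner_u by simp
  moreover have "u p s y - (p + s * (y - x0)) = prim (prim (\<lambda>t. F t (u p s t))) y"
    by (subst u_eq[OF y]) simp
  ultimately show ?thesis by simp
qed

lemma u_start: "u p s x0 = p"
  by (subst u_eq) (auto simp: prim_def)

end

context setting begin

lemma within_at:
  assumes "y > x0" "(g has_real_derivative D) (at y within {x0..})"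
  shows "(g has_real_derivative D) (at y)"
  using assms(2) at_within_interior[of y "{x0..}"] assms(1) by simp

lemma no_touch:
  fixes w w' :: "real \<Rightarrow> real"
  assumes x1: "x1 > x0" and d: "0 < \<delta>" "\<delta> \<le> x1 - x0"
    and wd: "\<And>y. y \<ge> x0 \<Longrightarrow> (w has_real_derivative w' y) (at y within {x0..})"
    and wd2: "(w' has_real_derivative c) (at x1 within {x0..})" and c: "c > 0"
    and mx: "\<And>y. y \<in> ball x1 \<delta> \<Longrightarrow> w y \<le> w x1"
  shows False
proof (rule no_max_pos2[of \<delta> x1 w w' c])
  fix y assume "y \<in> ball x1 \<delta>"
  then have "y > x0" using d by (auto simp: dist_real_def)
  then show "(w has_real_derivative w' y) (at y)" using wd within_at by auto
next
  show "(w' has_real_derivative c) (at x1)" by (rule within_at[OF x1 wd2])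
qed (use c mx d in auto)

definition "p0 = (\<alpha> x0 + \<beta> x0) / 2"
abbreviation "U s \<equiv> u p0 s"
abbreviation "U' s \<equiv> u' p0 s"

lemma U_cont_s:
  assumes y: "y \<ge> x0"
  shows "continuous_on A (\<lambda>s. U s y)"
proof -
  have "(exp (l * (y - x0)) * (2 / l))-lipschitz_on A (\<lambda>s. U s y)"
  proof (rule lipschitz_onI)
    fix s s' assume "s \<in> A" "s' \<in> A"
    show "dist (U s y) (U s' y) \<le> exp (l * (y - x0)) * (2 / l) * dist s s'"
      using u_lip[OF y, of p0 s s'] by (simp add: dist_real_def)
  qed (use l_pos in auto)
  then show ?thesis by (rule lipschitz_on_continuous_on)
qed

lemma U_d1: "y \<ge> x0 \<Longrightarrow> (U s has_real_derivative U' s y) (at y within {x0..})"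
  by (rule u_d1)
lemma U_d2: "y \<ge> x0 \<Longrightarrow> (U' s has_real_derivative F y (U s y)) (at y within {x0..})"
  by (rule u_d2)

lemma U_cont_on: "continuous_on A (U s)"
  using u_cont continuous_on_subset by blast

lemma maxp_upper:
  assumes N: "N > x0" and endN: "U s N \<le> \<beta> N"
  shows "\<forall>x\<in>{x0..N}. U s x \<le> \<beta> x"
proof (rule ccontr)
  assume "\<not> ?thesis"
  then obtain z where z: "z \<in> {x0..N}" "U s z > \<beta> z" by force
  have cont: "continuous_on {x0..N} (\<lambda>x. U s x - \<beta> x)"
    by (intro continuous_intros U_cont_on continuous_on_subset[OF \<beta>_cont]) auto
  obtain x1 where x1: "x1 \<in> {x0..N}" "\<And>y. y \<in> {x0..N} \<Longrightarrow> U s y - \<beta> y \<le> U s x1 - \<beta> x1"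
    using continuous_attains_sup[OF compact_Icc _ cont] N by auto
  have pos: "U s x1 - \<beta> x1 > 0" using x1(2)[OF z(1)] z(2) by simp
  have "x1 \<noteq> x0" using pos u_start[of p0 s] ordle[of x0] by (auto simp: p0_def)
  moreover have "x1 \<noteq> N" using pos endN by auto
  ultimately have x1i: "x0 < x1" "x1 < N" using x1(1) by auto
  define \<delta> where "\<delta> = min (x1 - x0) (N - x1)"
  have \<delta>: "0 < \<delta>" "\<delta> \<le> x1 - x0" using x1i by (auto simp: \<delta>_def)
  have Fx1: "F x1 (U s x1) = f x1 (\<beta> x1)" using F_above[OF x1i(1)] pos by simp
  show False
  proof (rule no_touch[OF x1i(1) \<delta>, of "\<lambda>x. U s x - \<beta> x" "\<lambda>x. U' s x - \<beta>' x"])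
    fix y :: real assume "y \<ge> x0"
    then show "((\<lambda>x. U s x - \<beta> x) has_real_derivative U' s y - \<beta>' y) (at y within {x0..})"
      using U_d1 \<beta>_d1 by (auto intro!: derivative_intros)
  next
    show "((\<lambda>x. U' s x - \<beta>' x) has_real_derivative F x1 (U s x1) - \<beta>'' x1) (at x1 within {x0..})"
      using U_d2 \<beta>_d2 x1i by (auto intro!: derivative_intros)
    show "F x1 (U s x1) - \<beta>'' x1 > 0" using Fx1 upper x1i by auto
  next
    fix y assume "y \<in> ball x1 \<delta>"
    then have "y \<in> {x0..N}" by (auto simp: \<delta>_def dist_real_def)
    then show "U s y - \<beta> y \<le> U s x1 - \<beta> x1" by (rule x1(2))
  qed
qed

lemma maxp_lower:
  assumes N: "N > x0" and endN: "\<alpha> N \<le> U s N"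
  shows "\<forall>x\<in>{x0..N}. \<alpha> x \<le> U s x"
proof (rule ccontr)
  assume "\<not> ?thesis"
  then obtain z where z: "z \<in> {x0..N}" "\<alpha> z > U s z" by force
  have cont: "continuous_on {x0..N} (\<lambda>x. \<alpha> x - U s x)"
    by (intro continuous_intros U_cont_on continuous_on_subset[OF \<alpha>_cont]) auto
  obtain x1 where x1: "x1 \<in> {x0..N}" "\<And>y. y \<in> {x0..N} \<Longrightarrow> \<alpha> y - U s y \<le> \<alpha> x1 - U s x1"
    using continuous_attains_sup[OF compact_Icc _ cont] N by auto
  have pos: "\<alpha> x1 - U s x1 > 0" using x1(2)[OF z(1)] z(2) by simp
  have "x1 \<noteq> x0" using pos u_start[of p0 s] ordle[of x0] by (auto simp: p0_def)
  moreover have "x1 \<noteq> N" using pos endN by auto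
  ultimately have x1i: "x0 < x1" "x1 < N" using x1(1) by auto
  define \<delta> where "\<delta> = min (x1 - x0) (N - x1)"
  have \<delta>: "0 < \<delta>" "\<delta> \<le> x1 - x0" using x1i by (auto simp: \<delta>_def)
  have Fx1: "F x1 (U s x1) = f x1 (\<alpha> x1)" using F_below[OF x1i(1)] pos by simp
  show False
  proof (rule no_touch[OF x1i(1) \<delta>, of "\<lambda>x. \<alpha> x - U s x" "\<lambda>x. \<alpha>' x - U' s x"])
    fix y :: real assume "y \<ge> x0"
    then show "((\<lambda>x. \<alpha> x - U s x) has_real_derivative \<alpha>' y - U' s y) (at y within {x0..})"
      using U_d1 \<alpha>_d1 by (auto intro!: derivative_intros)
  next
    show "((\<lambda>x. \<alpha>' x - U' s x) has_real_derivative \<alpha>'' x1 - F x1 (U s x1)) (at x1 within {x0..})"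
      using U_d2 \<alpha>_d2 x1i by (auto intro!: derivative_intros)
    show "\<alpha>'' x1 - F x1 (U s x1) > 0" using Fx1 lower x1i by auto
  next
    fix y assume "y \<in> ball x1 \<delta>"
    then have "y \<in> {x0..N}" by (auto simp: \<delta>_def dist_real_def)
    then show "\<alpha> y - U s y \<le> \<alpha> x1 - U s x1" by (rule x1(2))
  qed
qed

definition "SS N = {s. \<forall>x\<in>{x0..N}. \<alpha> x \<le> U s x \<and> U s x \<le> \<beta> x}"

lemma SS_nonempty:
  assumes N: "N > x0"
  shows "SS N \<noteq> {}"
proof -
  define tg where "tg = (\<alpha> N + \<beta> N) / 2"
  define M where "M = B * exp (l * (N - x0)) / l\<^sup>2"
  define s1 where "s1 = (tg - p0 - M) / (N - x0)"
  define s2 where "s2 = (tg - p0 + M) / (N - x0)"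
  have M: "M \<ge> 0" using B_nn l_pos by (simp add: M_def)
  have b1: "\<bar>U s N - (p0 + s * (N - x0))\<bar> \<le> M" for s using u_bnd[of N p0 s] N by (simp add: M_def)
  have e1: "p0 + s1 * (N - x0) = tg - M" using N by (simp add: s1_def)
  have e2: "p0 + s2 * (N - x0) = tg + M" using N by (simp add: s2_def)
  have "U s1 N \<le> tg" using b1[of s1] e1 by linarith
  moreover have "tg \<le> U s2 N" using b1[of s2] e2 by linarith
  moreover have "s1 \<le> s2" using N M by (simp add: s1_def s2_def divide_right_mono)
  ultimately obtain s where s: "U s N = tg"
    using IVT'[of "\<lambda>s. U s N" s1 tg s2] U_cont_s[of N] N by auto
  have "\<alpha> N \<le> \<beta> N" using ordle N by simp
  then have "U s N \<le> \<beta> N" "\<alpha> N \<le> U s N" using s by (auto simp: tg_def)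
  then have "s \<in> SS N" using maxp_upper[OF N] maxp_lower[OF N] by (auto simp: SS_def)
  then show ?thesis by auto
qed

lemma SS_closed: "closed (SS N)"
proof -
  have "SS N = (\<Inter>x\<in>{x0..N}. {s. \<alpha> x \<le> U s x} \<inter> {s. U s x \<le> \<beta> x})"
    by (auto simp: SS_def)
  also have "closed \<dots>"
    by (intro closed_INT ballI closed_Int closed_Collect_le continuous_intros U_cont_s) auto
  finally show ?thesis .
qed

lemma SS_mono: "N \<le> N' \<Longrightarrow> SS N' \<subseteq> SS N"
  by (auto simp: SS_def)

lemma SS_bounded: "bounded (SS (x0 + 1))"
proof -
  define M where "M = B * exp (l * 1) / l\<^sup>2"
  have "\<bar>s\<bar> \<le> \<bar>a\<bar> + \<bar>b\<bar> + \<bar>p0\<bar> + M" if s: "s \<in> SS (x0 + 1)" for s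
  proof -
    have "\<alpha> (x0+1) \<le> U s (x0+1)" "U s (x0+1) \<le> \<beta> (x0+1)" using s by (auto simp: SS_def)
    then have "U s (x0+1) \<in> {a..b}" using a_le[of "x0+1"] b_ge[of "x0+1"] by auto
    moreover have "\<bar>U s (x0+1) - (p0 + s)\<bar> \<le> M" using u_bnd[of "x0+1" p0 s] by (simp add: M_def)
    ultimately show ?thesis by (auto simp: abs_if split: if_splits)
  qed
  then show ?thesis unfolding bounded_real by blast
qed

lemma exists_s: "\<exists>s. \<forall>x\<ge>x0. \<alpha> x \<le> U s x \<and> U s x \<le> \<beta> x"
proof -
  define S where "S n = SS (x0 + 1 + real n)" for n
  obtain s where s: "\<And>n. s \<in> S n"
  proof (rule bounded_closed_nest[of S])
    show "closed (S n)" for n by (simp add: S_def SS_closed)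
    show "S n \<noteq> {}" for n by (simp add: S_def SS_nonempty)
    show "m \<le> n \<Longrightarrow> S n \<subseteq> S m" for m n by (simp add: S_def SS_mono)
    show "bounded (S 0)" by (simp add: S_def SS_bounded)
  qed blast
  show ?thesis
  proof (intro exI allI impI)
    fix x assume x: "x \<ge> x0"
    obtain n :: nat where "x - x0 \<le> real n" using real_arch_simple by blast
    then have "x \<in> {x0..x0 + 1 + real n}" using x by auto
    then show "\<alpha> x \<le> U s x \<and> U s x \<le> \<beta> x" using s[of n] by (auto simp: S_def SS_def)
  qed
qed

theorem partA: "\<exists>\<phi> \<phi>'. (\<forall>x\<ge>x0. (\<phi> has_real_derivative \<phi>' x) (at x within {x0..}) \<and>
              (\<phi>' has_real_derivative f x (\<phi> x)) (at x within {x0..})) \<and>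
           (\<forall>x\<ge>x0. \<alpha> x \<le> \<phi> x \<and> \<phi> x \<le> \<beta> x) \<and>
           (\<forall>x>x0. \<alpha> x < \<phi> x \<and> \<phi> x < \<beta> x)"
proof -
  obtain s where s: "\<And>x. x \<ge> x0 \<Longrightarrow> \<alpha> x \<le> U s x \<and> U s x \<le> \<beta> x" using exists_s by blast
  have FU: "F x (U s x) = f x (U s x)" if "x \<ge> x0" for x using F_in[OF that] s[OF that] by auto
  have d1: "(U s has_real_derivative U' s x) (at x within {x0..})" if "x \<ge> x0" for x
    using U_d1 that by auto
  have d2: "(U' s has_real_derivative f x (U s x)) (at x within {x0..})" if "x \<ge> x0" for x
    using U_d2[OF that, of s] FU[OF that] by simp
  have strict: "\<alpha> x < U s x \<and> U s x < \<beta> x" if x: "x > x0" for x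
  proof (intro conjI)
    show "U s x < \<beta> x"
    proof (rule ccontr)
      assume "\<not> U s x < \<beta> x"
      then have eq: "U s x = \<beta> x" using s[of x] x by auto
      show False
      proof (rule no_touch[OF x _ order_refl, of "\<lambda>y. U s y - \<beta> y" "\<lambda>y. U' s y - \<beta>' y"])
        fix y :: real assume "y \<ge> x0"
        then show "((\<lambda>x. U s x - \<beta> x) has_real_derivative U' s y - \<beta>' y) (at y within {x0..})"
          using d1 \<beta>_d1 by (auto intro!: derivative_intros)
      next
        show "((\<lambda>x. U' s x - \<beta>' x) has_real_derivative f x (U s x) - \<beta>'' x) (at x within {x0..})"
          using d2 \<beta>_d2 x by (auto intro!: derivative_intros)
        show "f x (U s x) - \<beta>'' x > 0" using eq upper x by auto
      next
        fix y assume "y \<in> ball x (x - x0)"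
        then have "y \<ge> x0" by (auto simp: dist_real_def)
        then show "U s y - \<beta> y \<le> U s x - \<beta> x" using s[of y] eq by auto
      qed (use x in auto)
    qed
    show "\<alpha> x < U s x"
    proof (rule ccontr)
      assume "\<not> \<alpha> x < U s x"
      then have eq: "U s x = \<alpha> x" using s[of x] x by auto
      show False
      proof (rule no_touch[OF x _ order_refl, of "\<lambda>y. \<alpha> y - U s y" "\<lambda>y. \<alpha>' y - U' s y"])
        fix y :: real assume "y \<ge> x0"
        then show "((\<lambda>x. \<alpha> x - U s x) has_real_derivative \<alpha>' y - U' s y) (at y within {x0..})"
          using d1 \<alpha>_d1 by (auto intro!: derivative_intros)
      next
        show "((\<lambda>x. \<alpha>' x - U' s x) has_real_derivative \<alpha>'' x - f x (U s x)) (at x within {x0..})"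
          using d2 \<alpha>_d2 x by (auto intro!: derivative_intros)
        show "\<alpha>'' x - f x (U s x) > 0" using eq lower x by auto
      next
        fix y assume "y \<in> ball x (x - x0)"
        then have "y \<ge> x0" by (auto simp: dist_real_def)
        then show "\<alpha> y - U s y \<le> \<alpha> x - U s x" using s[of y] eq by auto
      qed (use x in auto)
    qed
  qed
  show ?thesis using d1 d2 s strict by blast
qed

end

context setting begin

definition "mm = (INF p\<in>{0..L} \<times> {a..b}. deriv (\<lambda>y. f (fst p) y) (snd p))"

lemma fy_ge:
  assumes z: "z \<in> {a..b}"
  shows "mm \<le> fy x z"
proof -
  obtain x' where x': "x' \<in> {0..L}" "f x = f x'" using f_red by blast
  have "compact ((\<lambda>p. deriv (\<lambda>y. f (fst p) y) (snd p)) ` ({0..L} \<times> {a..b}))"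
  proof (intro compact_continuous_image compact_strip)
    have "continuous_on ({0..L} \<times> {a..b}) (\<lambda>(x, y). deriv (\<lambda>y. f x y) y)"
      using fy_cont continuous_on_subset by blast
    then show "continuous_on ({0..L} \<times> {a..b}) (\<lambda>p. deriv (\<lambda>y. f (fst p) y) (snd p))"
      by (simp add: case_prod_beta')
  qed
  then have bdd: "bdd_below ((\<lambda>p. deriv (\<lambda>y. f (fst p) y) (snd p)) ` ({0..L} \<times> {a..b}))"
    by (intro bounded_imp_bdd_below compact_imp_bounded)
  have "mm \<le> deriv (\<lambda>y. f (fst (x', z)) y) (snd (x', z))"
    unfolding mm_def by (rule cINF_lower[OF bdd]) (use x' z in auto)
  then show ?thesis using x' by (simp add: fy_def)
qed

lemma mono_f:
  assumes "y1 \<in> {a..b}" "y2 \<in> {a..b}"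
  shows "mm * (y1 - y2)\<^sup>2 \<le> (f x y1 - f x y2) * (y1 - y2)"
proof -
  obtain z where z: "z \<in> {a..b}" "f x y1 - f x y2 = (y1 - y2) * fy x z" using f_mvt[OF assms] by blast
  have "mm * (y1 - y2)\<^sup>2 \<le> fy x z * (y1 - y2)\<^sup>2" using fy_ge[OF z(1)] by (intro mult_right_mono) auto
  also have "\<dots> = (f x y1 - f x y2) * (y1 - y2)" using z(2) by (simp add: power2_eq_square)
  finally show ?thesis .
qed

definition "\<nu> = sqrt (2 * mm)"

lemma decay:
  fixes ua ua' wa wa' :: "real \<Rightarrow> real"
  assumes m: "mm > 0" and X: "X0 < X"
    and ud: "\<And>x. x > X0 \<Longrightarrow> (ua has_real_derivative ua' x) (at x) \<and> (ua' has_real_derivative f x (ua x)) (at x)"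
    and wd: "\<And>x. x > X0 \<Longrightarrow> (wa has_real_derivative wa' x) (at x) \<and> (wa' has_real_derivative f x (wa x)) (at x)"
    and uab: "\<And>x. x > X0 \<Longrightarrow> ua x \<in> {a..b} \<and> wa x \<in> {a..b}"
    and x: "x \<ge> X"
  shows "(ua x - wa x)\<^sup>2 \<le> (b - a)\<^sup>2 * exp (-(\<nu> * (x - X)))"
proof -
  define M where "M = (b - a)\<^sup>2"
  define g where "g t = (ua t - wa t)\<^sup>2" for t
  define g' where "g' t = 2 * (ua t - wa t) * (ua' t - wa' t)" for t
  define g'' where "g'' t = 2 * (ua' t - wa' t) * (ua' t - wa' t) + 2 * (ua t - wa t) * (f t (ua t) - f t (wa t))" for t
  have nu: "\<nu> > 0" "\<nu>\<^sup>2 = 2 * mm" using m by (auto simp: \<nu>_def)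
  have gM: "g t \<le> M" if "t > X0" for t
  proof -
    have "\<bar>ua t - wa t\<bar> \<le> b - a" using uab[OF that] by auto
    then have "\<bar>ua t - wa t\<bar>\<^sup>2 \<le> (b - a)\<^sup>2" by (intro power_mono) auto
    then show ?thesis by (simp add: g_def M_def)
  qed
  have gd: "(g has_real_derivative g' t) (at t)" if "t > X0" for t
    unfolding g_def[abs_def] g'_def using ud[OF that] wd[OF that]
    by (auto intro!: derivative_eq_intros)
  have gd2: "(g' has_real_derivative g'' t) (at t)" if "t > X0" for t
    unfolding g'_def[abs_def] g''_def using ud[OF that] wd[OF that]
    by (auto intro!: derivative_eq_intros simp: algebra_simps)
  have g''ge: "g'' t \<ge> 2 * mm * g t" if "t > X0" for t
  proof -
    have "mm * (ua t - wa t)\<^sup>2 \<le> (f t (ua t) - f t (wa t)) * (ua t - wa t)"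
      using mono_f uab[OF that] by blast
    moreover have "0 \<le> (ua' t - wa' t) * (ua' t - wa' t)" by simp
    ultimately show ?thesis unfolding g''_def g_def by (simp add: algebra_simps)
  qed
  have main: "g x \<le> M * exp (-(\<nu> * (x - X))) + e * exp (\<nu> * (x - X))" if e: "e > 0" for e
  proof (rule ccontr)
    define z where "z t = M * exp (-(\<nu> * (t - X))) + e * exp (\<nu> * (t - X))" for t
    define z' where "z' t = - \<nu> * M * exp (-(\<nu> * (t - X))) + \<nu> * e * exp (\<nu> * (t - X))" for t
    define h where "h t = g t - z t" for t
    have zd: "(z has_real_derivative z' t) (at t)" for t
      unfolding z_def[abs_def] z'_def by (auto intro!: derivative_eq_intros simp: algebra_simps)
    have zd2: "(z' has_real_derivative \<nu>\<^sup>2 * z t) (at t)" for t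
      unfolding z'_def[abs_def] z_def by (auto intro!: derivative_eq_intros simp: algebra_simps power2_eq_square)
    assume "\<not> g x \<le> M * exp (-(\<nu> * (x - X))) + e * exp (\<nu> * (x - X))"
    then have hx: "h x > 0" by (simp add: h_def z_def)
    define R where "R = x + 1 + (M + 1) / (e * \<nu>)"
    have M0: "M \<ge> 0" by (simp add: M_def)
    have "(M + 1) / (e * \<nu>) > 0" using M0 e nu by simp
    then have R: "R > x" by (simp add: R_def)
    have "e * (\<nu> * (R - X)) \<ge> M + 1"
    proof -
      have "R - X \<ge> (M + 1) / (e * \<nu>)" using x by (simp add: R_def)
      then have "(e * \<nu>) * (R - X) \<ge> (e * \<nu>) * ((M + 1) / (e * \<nu>))"
        using e nu by (intro mult_left_mono) auto
      moreover have "(e * \<nu>) * ((M + 1) / (e * \<nu>)) = M + 1" using e nu by simp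
      ultimately have "(e * \<nu>) * (R - X) \<ge> M + 1" by simp
      then show ?thesis by (simp add: mult.assoc)
    qed
    moreover have "\<nu> * (R - X) \<le> exp (\<nu> * (R - X))" using exp_ge_add_one_self[of "\<nu> * (R - X)"] by linarith
    ultimately have "e * exp (\<nu> * (R - X)) \<ge> M + 1"
      using e by (smt (verit) mult_left_mono)
    moreover have "M * exp (-(\<nu> * (R - X))) \<ge> 0" using M0 by simp
    ultimately have hR: "h R < 0" using gM[of R] R x X unfolding h_def z_def by linarith
    have hX: "h X < 0" using gM[of X] X e M0 by (simp add: h_def z_def)
    have cont: "continuous_on {X..R} h"
    proof -
      have "\<forall>t\<in>{X..R}. isCont h t"
      proof
        fix t assume "t \<in> {X..R}"
        then have "t > X0" using X by auto
        then have "(h has_real_derivative g' t - z' t) (at t)"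
          unfolding h_def[abs_def] using gd zd by (auto intro!: derivative_intros)
        then show "isCont h t" by (rule DERIV_isCont)
      qed
      then show ?thesis by (rule continuous_at_imp_continuous_on)
    qed
    obtain x1 where x1: "x1 \<in> {X..R}" "\<And>y. y \<in> {X..R} \<Longrightarrow> h y \<le> h x1"
      using continuous_attains_sup[OF compact_Icc _ cont] R x by auto
    have pos: "h x1 > 0" using x1(2)[of x] hx R x by auto
    have x1i: "X < x1" "x1 < R" using x1(1) pos hX hR by (auto simp: le_less)
    define \<delta> where "\<delta> = min (x1 - X) (R - x1)"
    show False
    proof (rule no_max_pos2[of \<delta> x1 h "\<lambda>t. g' t - z' t" "g'' x1 - \<nu>\<^sup>2 * z x1"])
      show "0 < \<delta>" using x1i by (simp add: \<delta>_def)
    next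
      fix y assume "y \<in> ball x1 \<delta>"
      then have "y > X0" using X by (auto simp: \<delta>_def dist_real_def)
      then show "(h has_real_derivative g' y - z' y) (at y)"
        unfolding h_def[abs_def] using gd zd by (auto intro!: derivative_intros)
    next
      show "((\<lambda>t. g' t - z' t) has_real_derivative g'' x1 - \<nu>\<^sup>2 * z x1) (at x1)"
        using gd2 zd2 x1i X by (auto intro!: derivative_intros)
    next
      have "g'' x1 \<ge> 2 * mm * g x1" using g''ge x1i X by auto
      then have "g'' x1 - \<nu>\<^sup>2 * z x1 \<ge> 2 * mm * h x1" using nu by (simp add: h_def algebra_simps)
      moreover have "2 * mm * h x1 > 0" using m pos by simp
      ultimately show "g'' x1 - \<nu>\<^sup>2 * z x1 > 0" by linarith
    next
      fix y assume "y \<in> ball x1 \<delta>"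
      then have "y \<in> {X..R}" by (auto simp: \<delta>_def dist_real_def)
      then show "h y \<le> h x1" by (rule x1(2))
    qed
  qed
  have "g x \<le> M * exp (-(\<nu> * (x - X)))"
  proof (rule field_le_epsilon)
    fix e :: real assume e: "e > 0"
    have "g x \<le> M * exp (-(\<nu> * (x - X))) + (e / exp (\<nu> * (x - X))) * exp (\<nu> * (x - X))"
      using main[of "e / exp (\<nu> * (x - X))"] e by simp
    then show "g x \<le> M * exp (-(\<nu> * (x - X))) + e" by simp
  qed
  then show ?thesis by (simp add: g_def M_def)
qed

end

context setting begin

definition "EE X t = (b - a) * exp (-(\<nu> / 2 * (t - X)))"

lemma EE_mono: "t' \<le> t \<Longrightarrow> mm > 0 \<Longrightarrow> EE X t \<le> EE X t'"
  unfolding EE_def using ab by (intro mult_left_mono) (auto simp: \<nu>_def)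

lemma EE_nn: "EE X t \<ge> 0" unfolding EE_def using ab by simp

lemma decay_sqrt:
  fixes ua ua' wa wa' :: "real \<Rightarrow> real"
  assumes m: "mm > 0" and X: "X0 < X"
    and ud: "\<And>x. x > X0 \<Longrightarrow> (ua has_real_derivative ua' x) (at x) \<and> (ua' has_real_derivative f x (ua x)) (at x)"
    and wd: "\<And>x. x > X0 \<Longrightarrow> (wa has_real_derivative wa' x) (at x) \<and> (wa' has_real_derivative f x (wa x)) (at x)"
    and uab: "\<And>x. x > X0 \<Longrightarrow> ua x \<in> {a..b} \<and> wa x \<in> {a..b}"
    and x: "x \<ge> X"
  shows "\<bar>ua x - wa x\<bar> \<le> EE X x"
proof -
  have "\<bar>ua x - wa x\<bar>\<^sup>2 \<le> (b - a)\<^sup>2 * exp (-(\<nu> * (x - X)))"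
    using decay[OF assms] by simp
  also have "\<dots> = (EE X x)\<^sup>2"
  proof -
    have e: "2 * (-(\<nu> / 2 * (x - X))) = -(\<nu> * (x - X))" by simp
    have "exp (-(\<nu> / 2 * (x - X))) ^ 2 = exp (-(\<nu> * (x - X)))"
      using exp_double[of "-(\<nu> / 2 * (x - X))"] unfolding e by simp
    then show ?thesis unfolding EE_def power_mult_distrib by simp
  qed
  finally show ?thesis using EE_nn by (rule power2_le_imp_le)
qed

lemma decay_d:
  fixes ua ua' wa wa' :: "real \<Rightarrow> real"
  assumes m: "mm > 0" and X: "X0 < X"
    and ud: "\<And>x. x > X0 \<Longrightarrow> (ua has_real_derivative ua' x) (at x) \<and> (ua' has_real_derivative f x (ua x)) (at x)"
    and wd: "\<And>x. x > X0 \<Longrightarrow> (wa has_real_derivative wa' x) (at x) \<and> (wa' has_real_derivative f x (wa x)) (at x)"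
    and uab: "\<And>x. x > X0 \<Longrightarrow> ua x \<in> {a..b} \<and> wa x \<in> {a..b}"
    and x: "x \<ge> X"
  shows "\<bar>ua' x - wa' x\<bar> \<le> (2 + K) * EE X x"
proof -
  have ds: "\<And>t. t \<ge> X \<Longrightarrow> \<bar>ua t - wa t\<bar> \<le> EE X t" using decay_sqrt[OF m X ud wd uab] by blast
  have "\<forall>t. x \<le> t \<and> t \<le> x + 1 \<longrightarrow> ((\<lambda>t. ua t - wa t) has_real_derivative ua' t - wa' t) (at t)"
    using ud wd x X by (auto intro!: derivative_intros)
  then obtain \<xi> where \<xi>: "x < \<xi>" "\<xi> < x + 1" "(ua (x+1) - wa (x+1)) - (ua x - wa x) = (x + 1 - x) * (ua' \<xi> - wa' \<xi>)"
    using MVT2[of x "x+1" "\<lambda>t. ua t - wa t" "\<lambda>t. ua' t - wa' t"] by auto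
  have "\<forall>t. x \<le> t \<and> t \<le> \<xi> \<longrightarrow> ((\<lambda>t. ua' t - wa' t) has_real_derivative f t (ua t) - f t (wa t)) (at t)"
    using ud wd x X \<xi> by (auto intro!: derivative_intros)
  then obtain \<eta> where \<eta>: "x < \<eta>" "\<eta> < \<xi>" "(ua' \<xi> - wa' \<xi>) - (ua' x - wa' x) = (\<xi> - x) * (f \<eta> (ua \<eta>) - f \<eta> (wa \<eta>))"
    using MVT2[of x \<xi> "\<lambda>t. ua' t - wa' t" "\<lambda>t. f t (ua t) - f t (wa t)"] \<xi> by auto
  have "\<bar>f \<eta> (ua \<eta>) - f \<eta> (wa \<eta>)\<bar> \<le> K * \<bar>ua \<eta> - wa \<eta>\<bar>"
    using f_lip uab[of \<eta>] \<eta> x X by auto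
  also have "\<dots> \<le> K * EE X \<eta>" using ds[of \<eta>] \<eta> x K_nn by (intro mult_left_mono) auto
  also have "\<dots> \<le> K * EE X x" using EE_mono[of x \<eta>] \<eta> m K_nn by (intro mult_left_mono) auto
  finally have b1: "\<bar>f \<eta> (ua \<eta>) - f \<eta> (wa \<eta>)\<bar> \<le> K * EE X x" .
  have "\<bar>(\<xi> - x) * (f \<eta> (ua \<eta>) - f \<eta> (wa \<eta>))\<bar> \<le> 1 * (K * EE X x)"
    unfolding abs_mult using \<xi> b1 by (intro mult_mono) auto
  then have b2: "\<bar>(ua' \<xi> - wa' \<xi>) - (ua' x - wa' x)\<bar> \<le> K * EE X x" using \<eta>(3) by simp
  have b3: "\<bar>ua' \<xi> - wa' \<xi>\<bar> \<le> EE X (x + 1) + EE X x"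
    using \<xi>(3) ds[of "x+1"] ds[of x] x by simp
  have "EE X (x + 1) \<le> EE X x" using EE_mono m by simp
  moreover have tri: "\<bar>ua' x - wa' x\<bar> \<le> \<bar>ua' \<xi> - wa' \<xi>\<bar> + \<bar>(ua' \<xi> - wa' \<xi>) - (ua' x - wa' x)\<bar>"
    using abs_triangle_ineq4[of "ua' \<xi> - wa' \<xi>" "(ua' \<xi> - wa' \<xi>) - (ua' x - wa' x)"] by simp
  moreover have "(2 + K) * EE X x = 2 * EE X x + K * EE X x" by (simp add: algebra_simps)
  ultimately show ?thesis using b2 b3 by linarith
qed

lemma geo_series:
  fixes c :: "nat \<Rightarrow> real"
  assumes c: "\<And>k. \<bar>c k\<bar> \<le> A * r ^ k" and r: "0 \<le> r" "r < 1"
  shows "summable c" "\<bar>suminf c\<bar> \<le> A / (1 - r)"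
proof -
  have sg: "summable (\<lambda>k. A * r ^ k)" using r by (intro summable_mult summable_geometric) auto
  show sc: "summable c" by (rule summable_comparison_test[OF _ sg]) (use c in auto)
  have sa: "summable (\<lambda>k. \<bar>c k\<bar>)" by (rule summable_comparison_test[OF _ sg]) (use c in auto)
  have "\<bar>suminf c\<bar> \<le> (\<Sum>k. \<bar>c k\<bar>)" using summable_norm[of c] sa by simp
  also have "\<dots> \<le> (\<Sum>k. A * r ^ k)" by (rule suminf_le[OF c sa sg])
  also have "\<dots> = A / (1 - r)" using suminf_mult[of "\<lambda>k. r ^ k" A] suminf_geometric[of r] r by simp
  finally show "\<bar>suminf c\<bar> \<le> A / (1 - r)" .
qed

end

locale setting2 = setting +
  fixes \<phi> \<phi>' :: "real \<Rightarrow> real"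
  assumes phi_d: "\<forall>x\<ge>x0. (\<phi> has_real_derivative \<phi>' x) (at x within {x0..}) \<and>
              (\<phi>' has_real_derivative f x (\<phi> x)) (at x within {x0..})"
    and phi_ab: "\<forall>x\<ge>x0. \<alpha> x \<le> \<phi> x \<and> \<phi> x \<le> \<beta> x"
    and mpos: "mm > 0"
begin

definition "X = x0 + 1"
definition "rr = exp (-(\<nu> / 2 * L))"

lemma nu_pos: "\<nu> > 0" using mpos by (simp add: \<nu>_def)
lemma rr: "0 < rr" "rr < 1" using nu_pos L_pos by (auto simp: rr_def)

lemma phi_at: "t > x0 \<Longrightarrow> (\<phi> has_real_derivative \<phi>' t) (at t) \<and> (\<phi>' has_real_derivative f t (\<phi> t)) (at t)"
  using phi_d within_at by auto

lemma phi_in: "t \<ge> x0 \<Longrightarrow> \<phi> t \<in> {a..b}"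
  using phi_ab a_le b_ge by (auto intro: order_trans)

lemma f_nat: "f (x + real n * L) = f x"
  using periodic_nat[of f L x n] f_shift by blast

lemma shift_at:
  assumes "t + c > x0" "c \<ge> 0"
  shows "((\<lambda>x. \<phi> (x + c)) has_real_derivative \<phi>' (t + c)) (at t) \<and>
         ((\<lambda>x. \<phi>' (x + c)) has_real_derivative f (t + c) (\<phi> (t + c))) (at t)"
  using phi_at[OF assms(1)] DERIV_shift by blast

lemma shiftL_at:
  assumes "t > x0"
  shows "((\<lambda>x. \<phi> (x + L)) has_real_derivative \<phi>' (t + L)) (at t) \<and>
         ((\<lambda>x. \<phi>' (x + L)) has_real_derivative f t (\<phi> (t + L))) (at t)"
  using shift_at[of t L] assms L_pos f_shift by simp

definition "dd t = \<phi> (t + L) - \<phi> t"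
definition "dd' t = \<phi>' (t + L) - \<phi>' t"

lemma dd_bound: "t \<ge> X \<Longrightarrow> \<bar>dd t\<bar> \<le> EE X t"
  unfolding dd_def X_def
  by (rule decay_sqrt[OF mpos _ shiftL_at phi_at]) (use phi_in L_pos in auto)

lemma dd'_bound: "t \<ge> X \<Longrightarrow> \<bar>dd' t\<bar> \<le> (2 + K) * EE X t"
  unfolding dd'_def X_def
  by (rule decay_d[OF mpos _ shiftL_at phi_at]) (use phi_in L_pos in auto)

lemma EE_shift: "EE X (t + real k * L) = EE X t * rr ^ k"
proof -
  have e1: "-(\<nu> / 2 * (t + real k * L - X)) = -(\<nu> / 2 * (t - X)) + real k * (-(\<nu> / 2 * L))"
    by (simp add: field_simps)
  have e2: "exp (real k * (-(\<nu> / 2 * L))) = rr ^ k"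
    unfolding rr_def by (rule exp_of_nat_mult)
  have "EE X (t + real k * L) = (b - a) * (exp (-(\<nu> / 2 * (t - X))) * exp (real k * (-(\<nu> / 2 * L))))"
    unfolding EE_def e1 exp_add by simp
  also have "\<dots> = EE X t * rr ^ k" unfolding e2 EE_def by simp
  finally show ?thesis .
qed

lemma tele: "\<phi> (y + real n * L) = \<phi> y + (\<Sum>k<n. dd (y + real k * L))"
proof (induction n)
  case (Suc n)
  have e: "\<phi> (y + real (Suc n) * L) = \<phi> (y + real n * L) + dd (y + real n * L)"
    by (simp add: dd_def algebra_simps)
  show ?case using e Suc by simp
qed simp

lemma tele': "\<phi>' (y + real n * L) = \<phi>' y + (\<Sum>k<n. dd' (y + real k * L))"
proof (induction n)
  case (Suc n)
  have e: "\<phi>' (y + real (Suc n) * L) = \<phi>' (y + real n * L) + dd' (y + real n * L)"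
    by (simp add: dd'_def algebra_simps)
  show ?case using e Suc by simp
qed simp

lemma P1:
  assumes y: "y \<ge> X"
  shows "(\<lambda>n. \<phi> (y + real n * L)) \<longlonglongrightarrow> \<phi> y + (\<Sum>k. dd (y + real k * L))"
    "\<bar>\<Sum>k. dd (y + real k * L)\<bar> \<le> EE X y / (1 - rr)"
proof -
  have c: "\<bar>dd (y + real k * L)\<bar> \<le> EE X y * rr ^ k" for k
  proof -
    have "X \<le> y + real k * L" using y L_pos by (simp add: add_increasing2)
    then show ?thesis using dd_bound[of "y + real k * L"] EE_shift by simp
  qed
  note gs = geo_series[OF c less_imp_le[OF rr(1)] rr(2)]
  show "\<bar>\<Sum>k. dd (y + real k * L)\<bar> \<le> EE X y / (1 - rr)" by (rule gs(2))
  have "(\<lambda>n. \<Sum>k<n. dd (y + real k * L)) \<longlonglongrightarrow> (\<Sum>k. dd (y + real k * L))"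
    using gs(1) by (simp add: summable_LIMSEQ)
  then have "(\<lambda>n. \<phi> y + (\<Sum>k<n. dd (y + real k * L))) \<longlonglongrightarrow> \<phi> y + (\<Sum>k. dd (y + real k * L))"
    by (intro tendsto_intros)
  then show "(\<lambda>n. \<phi> (y + real n * L)) \<longlonglongrightarrow> \<phi> y + (\<Sum>k. dd (y + real k * L))"
    by (simp add: tele)
qed

lemma P1':
  assumes y: "y \<ge> X"
  shows "(\<lambda>n. \<phi>' (y + real n * L)) \<longlonglongrightarrow> \<phi>' y + (\<Sum>k. dd' (y + real k * L))"
    "\<bar>\<Sum>k. dd' (y + real k * L)\<bar> \<le> (2 + K) * EE X y / (1 - rr)"
proof -
  have c: "\<bar>dd' (y + real k * L)\<bar> \<le> ((2 + K) * EE X y) * rr ^ k" for k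
  proof -
    have "X \<le> y + real k * L" using y L_pos by (simp add: add_increasing2)
    then show ?thesis using dd'_bound[of "y + real k * L"] EE_shift by (simp add: mult.assoc)
  qed
  note gs = geo_series[OF c less_imp_le[OF rr(1)] rr(2)]
  show "\<bar>\<Sum>k. dd' (y + real k * L)\<bar> \<le> (2 + K) * EE X y / (1 - rr)" by (rule gs(2))
  have "(\<lambda>n. \<Sum>k<n. dd' (y + real k * L)) \<longlonglongrightarrow> (\<Sum>k. dd' (y + real k * L))"
    using gs(1) by (simp add: summable_LIMSEQ)
  then have "(\<lambda>n. \<phi>' y + (\<Sum>k<n. dd' (y + real k * L))) \<longlonglongrightarrow> \<phi>' y + (\<Sum>k. dd' (y + real k * L))"
    by (intro tendsto_intros)
  then show "(\<lambda>n. \<phi>' (y + real n * L)) \<longlonglongrightarrow> \<phi>' y + (\<Sum>k. dd' (y + real k * L))"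
    by (simp add: tele')
qed

lemma ex_j: "\<exists>j::nat. x + real j * L \<ge> X"
proof -
  obtain j :: nat where "(X - x) / L \<le> real j" using real_arch_simple by blast
  then have "X - x \<le> real j * L" using L_pos by (simp add: field_simps)
  then show ?thesis by (intro exI[of _ j]) simp
qed

lemma shift_idx: "x + real (n + j) * L = (x + real j * L) + real n * L"
  by (simp add: algebra_simps)

definition "\<psi> x = lim (\<lambda>n. \<phi> (x + real n * L))"
definition "\<psi>1 x = lim (\<lambda>n. \<phi>' (x + real n * L))"

lemma conv: "(\<lambda>n. \<phi> (x + real n * L)) \<longlonglongrightarrow> \<psi> x"
proof -
  obtain j where j: "x + real j * L \<ge> X" using ex_j by blast
  have "(\<lambda>n. \<phi> (x + real (n + j) * L)) \<longlonglongrightarrow> \<phi> (x + real j * L) + (\<Sum>k. dd ((x + real j * L) + real k * L))"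
    unfolding shift_idx by (rule P1(1)[OF j])
  then have "(\<lambda>n. \<phi> (x + real n * L)) \<longlonglongrightarrow> \<phi> (x + real j * L) + (\<Sum>k. dd ((x + real j * L) + real k * L))"
    by (rule LIMSEQ_offset)
  then show ?thesis unfolding \<psi>_def by (simp add: limI)
qed

lemma conv': "(\<lambda>n. \<phi>' (x + real n * L)) \<longlonglongrightarrow> \<psi>1 x"
proof -
  obtain j where j: "x + real j * L \<ge> X" using ex_j by blast
  have "(\<lambda>n. \<phi>' (x + real (n + j) * L)) \<longlonglongrightarrow> \<phi>' (x + real j * L) + (\<Sum>k. dd' ((x + real j * L) + real k * L))"
    unfolding shift_idx by (rule P1'(1)[OF j])
  then have "(\<lambda>n. \<phi>' (x + real n * L)) \<longlonglongrightarrow> \<phi>' (x + real j * L) + (\<Sum>k. dd' ((x + real j * L) + real k * L))"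
    by (rule LIMSEQ_offset)
  then show ?thesis unfolding \<psi>1_def by (simp add: limI)
qed

lemma psi_per: "\<psi> (x + L) = \<psi> x"
proof -
  have "(\<lambda>n. \<phi> (x + real (Suc n) * L)) \<longlonglongrightarrow> \<psi> x" using conv[of x] by (rule LIMSEQ_Suc)
  moreover have "(\<lambda>n. \<phi> (x + real (Suc n) * L)) = (\<lambda>n. \<phi> ((x + L) + real n * L))"
    by (simp add: algebra_simps)
  ultimately have "(\<lambda>n. \<phi> ((x + L) + real n * L)) \<longlonglongrightarrow> \<psi> x" by simp
  from LIMSEQ_unique[OF conv[of "x + L"] this] show ?thesis .
qed

lemma psi1_per: "\<psi>1 (x + L) = \<psi>1 x"
proof -
  have "(\<lambda>n. \<phi>' (x + real (Suc n) * L)) \<longlonglongrightarrow> \<psi>1 x" using conv'[of x] by (rule LIMSEQ_Suc)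
  moreover have "(\<lambda>n. \<phi>' (x + real (Suc n) * L)) = (\<lambda>n. \<phi>' ((x + L) + real n * L))"
    by (simp add: algebra_simps)
  ultimately have "(\<lambda>n. \<phi>' ((x + L) + real n * L)) \<longlonglongrightarrow> \<psi>1 x" by simp
  from LIMSEQ_unique[OF conv'[of "x + L"] this] show ?thesis .
qed

lemma psi_close: "y \<ge> X \<Longrightarrow> \<bar>\<psi> y - \<phi> y\<bar> \<le> EE X y / (1 - rr)"
proof -
  assume y: "y \<ge> X"
  have "\<psi> y = \<phi> y + (\<Sum>k. dd (y + real k * L))" by (rule LIMSEQ_unique[OF conv P1(1)[OF y]])
  then show ?thesis using P1(2)[OF y] by simp
qed

lemma psi1_close: "y \<ge> X \<Longrightarrow> \<bar>\<psi>1 y - \<phi>' y\<bar> \<le> (2 + K) * EE X y / (1 - rr)"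
proof -
  assume y: "y \<ge> X"
  have "\<psi>1 y = \<phi>' y + (\<Sum>k. dd' (y + real k * L))" by (rule LIMSEQ_unique[OF conv' P1'(1)[OF y]])
  then show ?thesis using P1'(2)[OF y] by simp
qed

lemma psi_in: "\<psi> x \<in> {a..b}"
proof -
  obtain j where j: "x + real j * L \<ge> X" using ex_j by blast
  have ev: "eventually (\<lambda>n. \<phi> (x + real n * L) \<in> {a..b}) sequentially"
  proof (rule eventually_sequentiallyI[of j])
    fix n assume "j \<le> n"
    then have "x + real j * L \<le> x + real n * L" using L_pos by (simp add: mult_right_mono)
    then show "\<phi> (x + real n * L) \<in> {a..b}" using j phi_in by (simp add: X_def)
  qed
  have "a \<le> \<psi> x" by (rule tendsto_lowerbound[OF conv]) (use ev in \<open>auto elim: eventually_mono\<close>)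
  moreover have "\<psi> x \<le> b" by (rule tendsto_upperbound[OF conv]) (use ev in \<open>auto elim: eventually_mono\<close>)
  ultimately show ?thesis by simp
qed

end

lemma real_deriv_seq:
  fixes fs fs' :: "nat \<Rightarrow> real \<Rightarrow> real" and g' :: "real \<Rightarrow> real" and S :: "real set"
  assumes cvs: "convex S"
    and df: "\<And>n x. x \<in> S \<Longrightarrow> (fs n has_real_derivative fs' n x) (at x within S)"
    and conv: "\<And>e. 0 < e \<Longrightarrow> \<exists>N. \<forall>n x. n \<ge> N \<longrightarrow> x \<in> S \<longrightarrow> \<bar>fs' n x - g' x\<bar> \<le> e"
    and x: "x \<in> S" and tf: "(\<lambda>n. fs n x) \<longlonglongrightarrow> l"
  shows "\<exists>g. \<forall>x\<in>S. (\<lambda>n. fs n x) \<longlonglongrightarrow> g x \<and> (g has_real_derivative (g' x)) (at x within S)"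
  unfolding has_field_derivative_def
proof (rule has_derivative_sequence [OF cvs _ _ x])
  show "(\<lambda>n. fs n x) \<longlonglongrightarrow> l" by (rule tf)
next
  fix e :: real assume e: "e > 0"
  obtain N where N: "\<And>n x. n \<ge> N \<Longrightarrow> x \<in> S \<Longrightarrow> \<bar>fs' n x - g' x\<bar> \<le> e" using conv[OF e] by blast
  have "\<forall>x\<in>S. \<forall>h. norm (fs' n x * h - g' x * h) \<le> e * norm h" if n: "n \<ge> N" for n
  proof (intro ballI allI)
    fix x h assume "x \<in> S"
    have "norm (fs' n x * h - g' x * h) = \<bar>fs' n x - g' x\<bar> * \<bar>h\<bar>"
      by (simp add: abs_mult[symmetric] left_diff_distrib)
    also have "\<dots> \<le> e * \<bar>h\<bar>" using N[OF n \<open>x \<in> S\<close>] by (rule mult_right_mono) simp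
    finally show "norm (fs' n x * h - g' x * h) \<le> e * norm h" by simp
  qed
  then show "\<forall>\<^sub>F n in sequentially. \<forall>x\<in>S. \<forall>h. norm (fs' n x * h - g' x * h) \<le> e * norm h"
    unfolding eventually_sequentially by blast
next
  fix n x assume "x \<in> S"
  then show "(fs n has_derivative (*) (fs' n x)) (at x within S)"
    using df has_field_derivative_def by blast
qed

lemma unif_from_bound:
  fixes Bn :: "nat \<Rightarrow> real"
  assumes b: "\<And>n x. x \<in> S \<Longrightarrow> \<bar>fs' n x - g' x\<bar> \<le> Bn n" and t: "Bn \<longlonglongrightarrow> 0"
  shows "\<And>e. 0 < e \<Longrightarrow> \<exists>N. \<forall>n x. n \<ge> N \<longrightarrow> x \<in> S \<longrightarrow> \<bar>fs' n x - g' x\<bar> \<le> e"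
proof -
  fix e :: real assume e: "0 < e"
  have "eventually (\<lambda>n. Bn n < e) sequentially" using order_tendstoD(2)[OF t e] .
  then obtain N where "\<And>n. n \<ge> N \<Longrightarrow> Bn n < e" unfolding eventually_sequentially by blast
  then show "\<exists>N. \<forall>n x. n \<ge> N \<longrightarrow> x \<in> S \<longrightarrow> \<bar>fs' n x - g' x\<bar> \<le> e"
    using b by (meson less_imp_le order_trans)
qed

lemma exp_decay_lim:
  fixes c X :: real
  assumes c: "c > 0"
  shows "((\<lambda>x. exp (-(c * (x - X)))) \<longlongrightarrow> 0) at_top"
proof -
  have l1: "LIM x at_top. (-X + x) :> at_top"
    by (rule filterlim_tendsto_add_at_top[OF tendsto_const filterlim_ident])
  have l2: "LIM x at_top. c * (-X + x) :> at_top"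
    by (rule filterlim_tendsto_pos_mult_at_top[OF tendsto_const c l1])
  have l3: "LIM x at_top. -(c * (-X + x)) :> at_bot"
    using l2 by (simp add: filterlim_uminus_at_bot)
  have "((\<lambda>x. exp (-(c * (-X + x)))) \<longlongrightarrow> 0) at_top"
    by (rule filterlim_compose[OF exp_at_bot l3])
  then show ?thesis by simp
qed

context setting2 begin

lemma psi_nat: "\<psi> (x + real j * L) = \<psi> x"
  using periodic_nat[of \<psi> L x j] psi_per by blast

lemma psi1_nat: "\<psi>1 (x + real j * L) = \<psi>1 x"
  using periodic_nat[of \<psi>1 L x j] psi1_per by blast

lemma Lj_nn: "0 \<le> real j * L" using L_pos by simp

lemma ball_shift:
  assumes "x \<in> ball z 1" "X \<le> z - 1 + real N * L"
  shows "z - 1 + real (n + N) * L \<le> x + real (n + N) * L" "X \<le> x + real (n + N) * L"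
    "z - 1 + real (n + N) * L = (z - 1 + real N * L) + real n * L"
proof -
  have "z - 1 < x" using assms(1) by (auto simp: dist_real_def)
  then show "z - 1 + real (n + N) * L \<le> x + real (n + N) * L" by simp
  have "real N * L \<le> real (n + N) * L" using L_pos by (simp add: mult_right_mono)
  then show "X \<le> x + real (n + N) * L" using assms(2) \<open>z - 1 < x\<close> by linarith
  show "z - 1 + real (n + N) * L = (z - 1 + real N * L) + real n * L" by (simp add: algebra_simps)
qed

lemma rr_pow_lim: "(\<lambda>n. C * rr ^ n) \<longlonglongrightarrow> 0"
  using rr by (intro tendsto_mult_right_zero LIMSEQ_power_zero) auto

lemma deriv_psi: "(\<psi> has_real_derivative \<psi>1 z) (at z)"
proof -
  define S where "S = ball z (1::real)"
  obtain N :: nat where N: "X \<le> (z - 1) + real N * L" using ex_j by blast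
  define C where "C = (2 + K) * EE X (z - 1 + real N * L) / (1 - rr)"
  have "\<exists>g. \<forall>x\<in>S. (\<lambda>n. \<phi> (x + real (n + N) * L)) \<longlonglongrightarrow> g x \<and> (g has_real_derivative \<psi>1 x) (at x within S)"
  proof (rule real_deriv_seq[of S _ "\<lambda>n x. \<phi>' (x + real (n + N) * L)" _ z "\<psi> z"])
    show "convex S" by (simp add: S_def)
    show "z \<in> S" by (simp add: S_def)
    show "(\<lambda>n. \<phi> (z + real (n + N) * L)) \<longlonglongrightarrow> \<psi> z"
      using LIMSEQ_ignore_initial_segment[OF conv[of z], of N] by simp
  next
    fix n x assume x: "x \<in> S"
    have "x + real (n + N) * L > x0" using ball_shift(2)[of x z N n] x N by (simp add: S_def X_def)
    then have "((\<lambda>x. \<phi> (x + real (n + N) * L)) has_real_derivative \<phi>' (x + real (n + N) * L)) (at x)"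
      using shift_at[of x "real (n + N) * L"] Lj_nn by blast
    then show "((\<lambda>x. \<phi> (x + real (n + N) * L)) has_real_derivative \<phi>' (x + real (n + N) * L)) (at x within S)"
      by (rule has_field_derivative_at_within)
  next
    show "\<And>e. 0 < e \<Longrightarrow> \<exists>Na. \<forall>n x. Na \<le> n \<longrightarrow> x \<in> S \<longrightarrow> \<bar>\<phi>' (x + real (n + N) * L) - \<psi>1 x\<bar> \<le> e"
    proof (rule unif_from_bound[of S _ _ "\<lambda>n. C * rr ^ n"])
      fix n x assume x: "x \<in> S"
      note bs = ball_shift[of x z N n, folded S_def, OF x N]
      have "\<bar>\<phi>' (x + real (n + N) * L) - \<psi>1 x\<bar> = \<bar>\<psi>1 (x + real (n + N) * L) - \<phi>' (x + real (n + N) * L)\<bar>"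
        unfolding psi1_nat by (rule abs_minus_commute)
      also have "\<dots> \<le> (2 + K) * EE X (x + real (n + N) * L) / (1 - rr)" by (rule psi1_close[OF bs(2)])
      also have "\<dots> \<le> (2 + K) * EE X (z - 1 + real (n + N) * L) / (1 - rr)"
        using EE_mono[OF bs(1) mpos] K_nn rr by (intro divide_right_mono mult_left_mono) auto
      also have "\<dots> = C * rr ^ n" unfolding bs(3) EE_shift C_def by simp
      finally show "\<bar>\<phi>' (x + real (n + N) * L) - \<psi>1 x\<bar> \<le> C * rr ^ n" .
    qed (rule rr_pow_lim)
  qed
  then obtain g where g: "\<And>x. x \<in> S \<Longrightarrow> (\<lambda>n. \<phi> (x + real (n + N) * L)) \<longlonglongrightarrow> g x"
    "\<And>x. x \<in> S \<Longrightarrow> (g has_real_derivative \<psi>1 x) (at x within S)" by blast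
  have gpsi: "g x = \<psi> x" if "x \<in> S" for x
    using LIMSEQ_unique[OF g(1)[OF that]] LIMSEQ_ignore_initial_segment[OF conv[of x], of N] by simp
  have "(g has_real_derivative \<psi>1 z) (at z)"
    using g(2)[of z] at_within_open[of z S] by (simp add: S_def)
  then show ?thesis
    by (rule has_field_derivative_transform_within_open[of g _ z S]) (auto simp: S_def gpsi)
qed

lemma deriv_psi1: "(\<psi>1 has_real_derivative f z (\<psi> z)) (at z)"
proof -
  define S where "S = ball z (1::real)"
  obtain N :: nat where N: "X \<le> (z - 1) + real N * L" using ex_j by blast
  define C where "C = K * (EE X (z - 1 + real N * L) / (1 - rr))"
  have "\<exists>g. \<forall>x\<in>S. (\<lambda>n. \<phi>' (x + real (n + N) * L)) \<longlonglongrightarrow> g x \<and> (g has_real_derivative f x (\<psi> x)) (at x within S)"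
  proof (rule real_deriv_seq[of S _ "\<lambda>n x. f x (\<phi> (x + real (n + N) * L))" _ z "\<psi>1 z"])
    show "convex S" by (simp add: S_def)
    show "z \<in> S" by (simp add: S_def)
    show "(\<lambda>n. \<phi>' (z + real (n + N) * L)) \<longlonglongrightarrow> \<psi>1 z"
      using LIMSEQ_ignore_initial_segment[OF conv'[of z], of N] by simp
  next
    fix n x assume x: "x \<in> S"
    have "x + real (n + N) * L > x0" using ball_shift(2)[of x z N n] x N by (simp add: S_def X_def)
    then have "((\<lambda>x. \<phi>' (x + real (n + N) * L)) has_real_derivative f (x + real (n + N) * L) (\<phi> (x + real (n + N) * L))) (at x)"
      using shift_at[of x "real (n + N) * L"] Lj_nn by blast
    then show "((\<lambda>x. \<phi>' (x + real (n + N) * L)) has_real_derivative f x (\<phi> (x + real (n + N) * L))) (at x within S)"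
      unfolding f_nat by (rule has_field_derivative_at_within)
  next
    show "\<And>e. 0 < e \<Longrightarrow> \<exists>Na. \<forall>n x. Na \<le> n \<longrightarrow> x \<in> S \<longrightarrow> \<bar>f x (\<phi> (x + real (n + N) * L)) - f x (\<psi> x)\<bar> \<le> e"
    proof (rule unif_from_bound[of S _ _ "\<lambda>n. C * rr ^ n"])
      fix n x assume x: "x \<in> S"
      note bs = ball_shift[of x z N n, folded S_def, OF x N]
      have inab: "\<phi> (x + real (n + N) * L) \<in> {a..b}" using bs(2) phi_in by (simp add: X_def)
      have "\<bar>f x (\<phi> (x + real (n + N) * L)) - f x (\<psi> x)\<bar> \<le> K * \<bar>\<phi> (x + real (n + N) * L) - \<psi> x\<bar>"
        by (rule f_lip[OF inab psi_in])
      also have "\<bar>\<phi> (x + real (n + N) * L) - \<psi> x\<bar> = \<bar>\<psi> (x + real (n + N) * L) - \<phi> (x + real (n + N) * L)\<bar>"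
        unfolding psi_nat by (rule abs_minus_commute)
      also have "K * \<dots> \<le> K * (EE X (x + real (n + N) * L) / (1 - rr))"
        using psi_close[OF bs(2)] K_nn by (rule mult_left_mono)
      also have "\<dots> \<le> K * (EE X (z - 1 + real (n + N) * L) / (1 - rr))"
        using EE_mono[OF bs(1) mpos] K_nn rr by (intro divide_right_mono mult_left_mono) auto
      also have "\<dots> = C * rr ^ n" unfolding bs(3) EE_shift C_def by simp
      finally show "\<bar>f x (\<phi> (x + real (n + N) * L)) - f x (\<psi> x)\<bar> \<le> C * rr ^ n" .
    qed (rule rr_pow_lim)
  qed
  then obtain g where g: "\<And>x. x \<in> S \<Longrightarrow> (\<lambda>n. \<phi>' (x + real (n + N) * L)) \<longlonglongrightarrow> g x"
    "\<And>x. x \<in> S \<Longrightarrow> (g has_real_derivative f x (\<psi> x)) (at x within S)" by blast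
  have gpsi: "g x = \<psi>1 x" if "x \<in> S" for x
    using LIMSEQ_unique[OF g(1)[OF that]] LIMSEQ_ignore_initial_segment[OF conv'[of x], of N] by simp
  have "(g has_real_derivative f z (\<psi> z)) (at z)"
    using g(2)[of z] at_within_open[of z S] by (simp add: S_def)
  then show ?thesis
    by (rule has_field_derivative_transform_within_open[of g _ z S]) (auto simp: S_def gpsi)
qed

lemma deriv_psi_eq: "deriv \<psi> = \<psi>1"
  using deriv_psi DERIV_imp_deriv by blast

lemma psi_sol: "solution_on_real f \<psi>"
  unfolding solution_on_real_def deriv_psi_eq
  using deriv_psi deriv_psi1 real_differentiable_def by blast

lemma psi_lim: "((\<lambda>x. \<bar>\<phi> x - \<psi> x\<bar> + \<bar>\<phi>' x - deriv \<psi> x\<bar>) \<longlongrightarrow> 0) at_top"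
proof (rule tendsto_sandwich[of "\<lambda>_. 0" _ _ "\<lambda>x. (3 + K) / (1 - rr) * EE X x"])
  show "\<forall>\<^sub>F x in at_top. 0 \<le> \<bar>\<phi> x - \<psi> x\<bar> + \<bar>\<phi>' x - deriv \<psi> x\<bar>" by simp
  show "\<forall>\<^sub>F x in at_top. \<bar>\<phi> x - \<psi> x\<bar> + \<bar>\<phi>' x - deriv \<psi> x\<bar> \<le> (3 + K) / (1 - rr) * EE X x"
  proof (rule eventually_at_top_linorderI[of X])
    fix x assume x: "x \<ge> X"
    have "\<bar>\<phi> x - \<psi> x\<bar> \<le> EE X x / (1 - rr)" using psi_close[OF x] by (simp add: abs_minus_commute)
    moreover have "\<bar>\<phi>' x - deriv \<psi> x\<bar> \<le> (2 + K) * EE X x / (1 - rr)"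
      using psi1_close[OF x] by (simp add: abs_minus_commute deriv_psi_eq)
    moreover have "EE X x / (1 - rr) + (2 + K) * EE X x / (1 - rr) = (3 + K) / (1 - rr) * EE X x"
    proof -
      have "EE X x / (1 - rr) + (2 + K) * EE X x / (1 - rr) = (EE X x + (2 + K) * EE X x) / (1 - rr)"
        by (rule add_divide_distrib[symmetric])
      also have "EE X x + (2 + K) * EE X x = (3 + K) * EE X x" by (simp add: algebra_simps)
      finally show ?thesis by simp
    qed
    ultimately show "\<bar>\<phi> x - \<psi> x\<bar> + \<bar>\<phi>' x - deriv \<psi> x\<bar> \<le> (3 + K) / (1 - rr) * EE X x" by linarith
  qed
  show "((\<lambda>_. 0) \<longlongrightarrow> (0::real)) at_top" by simp
  have "((\<lambda>x. exp (-(\<nu> / 2 * (x - X)))) \<longlongrightarrow> 0) at_top"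
    using exp_decay_lim[of "\<nu> / 2" X] nu_pos by simp
  then have "((\<lambda>x. (3 + K) / (1 - rr) * ((b - a) * exp (-(\<nu> / 2 * (x - X))))) \<longlongrightarrow> 0) at_top"
    by (intro tendsto_mult_right_zero)
  then show "((\<lambda>x. (3 + K) / (1 - rr) * EE X x) \<longlongrightarrow> 0) at_top" by (simp add: EE_def)
qed

lemma psi_unique:
  assumes sol: "solution_on_real f \<eta>" and per: "L_periodic L \<eta>" and inab: "\<forall>x. \<eta> x \<in> {a..b}"
  shows "\<eta> = \<psi>"
proof -
  have ed: "(\<eta> has_real_derivative deriv \<eta> x) (at x)" for x
    using sol by (simp add: solution_on_real_def DERIV_deriv_iff_real_differentiable)
  have ed2: "(deriv \<eta> has_real_derivative f x (\<eta> x)) (at x)" for x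
    using sol by (simp add: solution_on_real_def)
  define g where "g t = (\<eta> t - \<psi> t)\<^sup>2" for t
  define g' where "g' t = 2 * (\<eta> t - \<psi> t) * (deriv \<eta> t - \<psi>1 t)" for t
  define g'' where "g'' t = 2 * (deriv \<eta> t - \<psi>1 t) * (deriv \<eta> t - \<psi>1 t) + 2 * (\<eta> t - \<psi> t) * (f t (\<eta> t) - f t (\<psi> t))" for t
  have gd: "(g has_real_derivative g' t) (at t)" for t
    unfolding g_def[abs_def] g'_def using ed[of t] deriv_psi[of t]
    by (auto intro!: derivative_eq_intros)
  have gd2: "(g' has_real_derivative g'' t) (at t)" for t
    unfolding g'_def[abs_def] g''_def using ed[of t] ed2[of t] deriv_psi[of t] deriv_psi1[of t]
    by (auto intro!: derivative_eq_intros simp: algebra_simps)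
  have g''ge: "g'' t \<ge> 2 * mm * g t" for t
  proof -
    have "mm * (\<eta> t - \<psi> t)\<^sup>2 \<le> (f t (\<eta> t) - f t (\<psi> t)) * (\<eta> t - \<psi> t)"
      using mono_f inab psi_in by blast
    moreover have "0 \<le> (deriv \<eta> t - \<psi>1 t) * (deriv \<eta> t - \<psi>1 t)" by simp
    ultimately show ?thesis unfolding g''_def g_def by (simp add: algebra_simps)
  qed
  have gper: "g (x + L) = g x" for x
    using per psi_per by (simp add: g_def L_periodic_def)
  have cont: "continuous_on {0..L} g"
    using gd by (intro continuous_at_imp_continuous_on ballI DERIV_isCont) auto
  obtain x1 where x1: "x1 \<in> {0..L}" "\<And>y. y \<in> {0..L} \<Longrightarrow> g y \<le> g x1"
    using continuous_attains_sup[OF compact_Icc _ cont] L_pos by auto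
  have gmax: "g y \<le> g x1" for y
  proof -
    obtain y' where "y' \<in> {0..L}" "g y = g y'" using periodic_reduce[of g L y] gper L_pos by blast
    then show ?thesis using x1(2) by simp
  qed
  have "g x1 \<le> 0"
  proof (rule ccontr)
    assume "\<not> g x1 \<le> 0"
    then have pos: "g x1 > 0" by simp
    show False
    proof (rule no_max_pos2[of 1 x1 g g' "g'' x1"])
      show "g'' x1 > 0" using g''ge[of x1] pos mpos by (smt (verit) mult_pos_pos)
    qed (use gd gd2 gmax in auto)
  qed
  then have "g y = 0" for y using gmax[of y] by (simp add: g_def)
  then show ?thesis by (auto simp: g_def)
qed

end

theorem theorem2:
  fixes L x0 :: real
    and f :: "real \<Rightarrow> real \<Rightarrow> real"
    and \<alpha> \<alpha>' \<alpha>'' \<beta> \<beta>' \<beta>'' :: "real \<Rightarrow> real"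
  assumes L_pos: "L > 0"
    and f_cont: "continuous_on UNIV (\<lambda>(x, y). f x y)"
    and f_per: "\<forall>x y. f (x + L) y = f x y"
    and f_diff: "\<forall>x y. (\<lambda>y. f x y) differentiable (at y)"
    and fy_cont: "continuous_on UNIV (\<lambda>(x, y). deriv (\<lambda>y. f x y) y)"
    and \<alpha>_bdd: "bounded (\<alpha> ` {x0..})"
    and \<beta>_bdd: "bounded (\<beta> ` {x0..})"
    and \<alpha>_d1: "\<forall>x\<ge>x0. (\<alpha> has_real_derivative \<alpha>' x) (at x within {x0..})"
    and \<alpha>_d2: "\<forall>x\<ge>x0. (\<alpha>' has_real_derivative \<alpha>'' x) (at x within {x0..})"
    and \<beta>_d1: "\<forall>x\<ge>x0. (\<beta> has_real_derivative \<beta>' x) (at x within {x0..})"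
    and \<beta>_d2: "\<forall>x\<ge>x0. (\<beta>' has_real_derivative \<beta>'' x) (at x within {x0..})"
    and ord: "\<forall>x>x0. \<alpha> x < \<beta> x"
    and lower: "\<forall>x>x0. \<alpha>'' x > f x (\<alpha> x)"
    and upper: "\<forall>x>x0. \<beta>'' x < f x (\<beta> x)"
  shows "\<exists>\<phi> \<phi>'. solution_on_halfline f x0 \<phi> \<phi>' \<and>
           (\<forall>x>x0. \<alpha> x < \<phi> x \<and> \<phi> x < \<beta> x) \<and>
           ((INF p\<in>{0..L} \<times> {Inf (\<alpha> ` {x0..})..Sup (\<beta> ` {x0..})}.
               deriv (\<lambda>y. f (fst p) y) (snd p)) > 0 \<longrightarrow>
             (\<exists>\<psi>. solution_on_real f \<psi> \<and> L_periodic L \<psi> \<and>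
                ((\<lambda>x. \<bar>\<phi> x - \<psi> x\<bar> + \<bar>\<phi>' x - deriv \<psi> x\<bar>) \<longlongrightarrow> 0) at_top \<and>
                (\<forall>x. \<psi> x \<in> {Inf (\<alpha> ` {x0..})..Sup (\<beta> ` {x0..})}) \<and>
                (\<forall>\<eta>. solution_on_real f \<eta> \<and> L_periodic L \<eta> \<and>
                      (\<forall>x. \<eta> x \<in> {Inf (\<alpha> ` {x0..})..Sup (\<beta> ` {x0..})}) \<longrightarrow> \<eta> = \<psi>)))"
proof -
  interpret S: setting L x0 f \<alpha> \<alpha>' \<alpha>'' \<beta> \<beta>' \<beta>''
    by (unfold_locales) (use assms in auto)
  obtain \<phi> \<phi>' where phd: "\<forall>x\<ge>x0. (\<phi> has_real_derivative \<phi>' x) (at x within {x0..}) \<and>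
              (\<phi>' has_real_derivative f x (\<phi> x)) (at x within {x0..})"
    and phab: "\<forall>x\<ge>x0. \<alpha> x \<le> \<phi> x \<and> \<phi> x \<le> \<beta> x"
    and phs: "\<forall>x>x0. \<alpha> x < \<phi> x \<and> \<phi> x < \<beta> x"
    using S.partA by blast
  have ab: "{Inf (\<alpha> ` {x0..})..Sup (\<beta> ` {x0..})} = {S.a..S.b}" by (simp add: S.a_def S.b_def)
  show ?thesis
  proof (rule exI[of _ \<phi>], rule exI[of _ \<phi>'], intro conjI impI)
    show "solution_on_halfline f x0 \<phi> \<phi>'" unfolding solution_on_halfline_def using phd by blast
    show "\<forall>x>x0. \<alpha> x < \<phi> x \<and> \<phi> x < \<beta> x" by (rule phs)
    assume "(INF p\<in>{0..L} \<times> {Inf (\<alpha> ` {x0..})..Sup (\<beta> ` {x0..})}. deriv (\<lambda>y. f (fst p) y) (snd p)) > 0"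
    then have m: "S.mm > 0" unfolding ab S.mm_def .
    interpret S2: setting2 L x0 f \<alpha> \<alpha>' \<alpha>'' \<beta> \<beta>' \<beta>'' \<phi> \<phi>'
      by (unfold_locales) (use phd phab m in auto)
    show "\<exists>\<psi>. solution_on_real f \<psi> \<and> L_periodic L \<psi> \<and>
                ((\<lambda>x. \<bar>\<phi> x - \<psi> x\<bar> + \<bar>\<phi>' x - deriv \<psi> x\<bar>) \<longlongrightarrow> 0) at_top \<and>
                (\<forall>x. \<psi> x \<in> {Inf (\<alpha> ` {x0..})..Sup (\<beta> ` {x0..})}) \<and>
                (\<forall>\<eta>. solution_on_real f \<eta> \<and> L_periodic L \<eta> \<and>
                      (\<forall>x. \<eta> x \<in> {Inf (\<alpha> ` {x0..})..Sup (\<beta> ` {x0..})}) \<longrightarrow> \<eta> = \<psi>)"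
      unfolding ab
    proof (rule exI[of _ S2.\<psi>], intro conjI allI impI)
      show "solution_on_real f S2.\<psi>" by (rule S2.psi_sol)
      show "L_periodic L S2.\<psi>" unfolding L_periodic_def using S2.psi_per by blast
      show "((\<lambda>x. \<bar>\<phi> x - S2.\<psi> x\<bar> + \<bar>\<phi>' x - deriv S2.\<psi> x\<bar>) \<longlongrightarrow> 0) at_top" by (rule S2.psi_lim)
      show "S2.\<psi> x \<in> {S.a..S.b}" for x by (rule S2.psi_in)
      fix \<eta> assume "solution_on_real f \<eta> \<and> L_periodic L \<eta> \<and> (\<forall>x. \<eta> x \<in> {S.a..S.b})"
      then show "\<eta> = S2.\<psi>" using S2.psi_unique by blast
    qed
  qed
qed

end
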